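(* Every cactus is in $B_1^m$.
   Context: A cactus is a connected graph in which any two simple cycles have at most one vertex in common. An EPG representation of a graph is a set of paths on a rectangular grid (sequences of grid points joined consecutively by grid edges), one per vertex, such that two vertices are adjacent iff their paths share a grid edge. A bend is a point of a path where a horizontal and a vertical grid edge of the path meet; a path is monotonic if it is ascending in both columns and rows. $B_1^m$ is the class of graphs having an EPG representation in which every path is monotonic and has at most one bend. *)

theory Defs
  imports Main
begin

definition simple_graph :: "'a set \<Rightarrow> ('a \<Rightarrow> 'a \<Rightarrow> bool) \<Rightarrow> bool" where
  "simple_graph V E \<longleftrightarrow> finite V \<and> (\<forall>u v. E u v \<longrightarrow> E v u)
     \<and> (\<forall>v. \<not> E v v) \<and> (\<forall>u v. E u v \<longrightarrow> u \<in> V \<and> v \<in> V)"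

definition connected_graph :: "'a set \<Rightarrow> ('a \<Rightarrow> 'a \<Rightarrow> bool) \<Rightarrow> bool" where
  "connected_graph V E \<longleftrightarrow> simple_graph V E \<and> V \<noteq> {}
     \<and> (\<forall>u\<in>V. \<forall>v\<in>V. E\<^sup>*\<^sup>* u v)"

definition simple_cycle :: "'a set \<Rightarrow> ('a \<Rightarrow> 'a \<Rightarrow> bool) \<Rightarrow> 'a list \<Rightarrow> bool" where
  "simple_cycle V E cs \<longleftrightarrow> length cs \<ge> 3 \<and> distinct cs \<and> set cs \<subseteq> V
     \<and> (\<forall>i < length cs. E (cs ! i) (cs ! ((i + 1) mod length cs)))"

definition cycle_edges :: "'a list \<Rightarrow> 'a set set" where
  "cycle_edges cs = {{cs ! i, cs ! ((i + 1) mod length cs)} | i. i < length cs}"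

text \<open>Two simple cycles are the same cycle iff they have the same edge set.
A cactus: connected graph in which any two distinct simple cycles share at most one vertex.\<close>
definition cactus :: "'a set \<Rightarrow> ('a \<Rightarrow> 'a \<Rightarrow> bool) \<Rightarrow> bool" where
  "cactus V E \<longleftrightarrow> connected_graph V E
     \<and> (\<forall>c1 c2. simple_cycle V E c1 \<and> simple_cycle V E c2 \<and> cycle_edges c1 \<noteq> cycle_edges c2
          \<longrightarrow> card (set c1 \<inter> set c2) \<le> 1)"

type_synonym gpoint = "int \<times> int"

text \<open>Grid points are (column, row); grid edges join points at distance 1
horizontally or vertically.\<close>
definition grid_adj :: "gpoint \<Rightarrow> gpoint \<Rightarrow> bool" where
  "grid_adj p q \<longleftrightarrow> (snd p = snd q \<and> \<bar>fst p - fst q\<bar> = 1) \<or> (fst p = fst q \<and> \<bar>snd p - snd q\<bar> = 1)"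

definition grid_path :: "gpoint list \<Rightarrow> bool" where
  "grid_path ps \<longleftrightarrow> length ps \<ge> 2 \<and> (\<forall>i. i + 1 < length ps \<longrightarrow> grid_adj (ps ! i) (ps ! (i + 1)))"

definition path_edges :: "gpoint list \<Rightarrow> gpoint set set" where
  "path_edges ps = {{ps ! i, ps ! (i + 1)} | i. i + 1 < length ps}"

definition horizontal :: "gpoint \<Rightarrow> gpoint \<Rightarrow> bool" where
  "horizontal p q \<longleftrightarrow> snd p = snd q"

definition vertical :: "gpoint \<Rightarrow> gpoint \<Rightarrow> bool" where
  "vertical p q \<longleftrightarrow> fst p = fst q"

definition is_bend :: "gpoint list \<Rightarrow> nat \<Rightarrow> bool" where
  "is_bend ps i \<longleftrightarrow> 0 < i \<and> i + 1 < length ps \<and>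
     ((horizontal (ps ! (i - 1)) (ps ! i) \<and> vertical (ps ! i) (ps ! (i + 1)))
      \<or> (vertical (ps ! (i - 1)) (ps ! i) \<and> horizontal (ps ! i) (ps ! (i + 1))))"

definition num_bends :: "gpoint list \<Rightarrow> nat" where
  "num_bends ps = card {i. is_bend ps i}"

definition monotonic :: "gpoint list \<Rightarrow> bool" where
  "monotonic ps \<longleftrightarrow> (\<forall>i j. i \<le> j \<and> j < length ps \<longrightarrow>
       fst (ps ! i) \<le> fst (ps ! j) \<and> snd (ps ! i) \<le> snd (ps ! j))"

definition EPG_rep :: "'a set \<Rightarrow> ('a \<Rightarrow> 'a \<Rightarrow> bool) \<Rightarrow> ('a \<Rightarrow> gpoint list) \<Rightarrow> bool" where
  "EPG_rep V E P \<longleftrightarrow> (\<forall>v\<in>V. grid_path (P v))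
     \<and> (\<forall>u\<in>V. \<forall>v\<in>V. u \<noteq> v \<longrightarrow> (E u v \<longleftrightarrow> path_edges (P u) \<inter> path_edges (P v) \<noteq> {}))"

definition in_B1m :: "'a set \<Rightarrow> ('a \<Rightarrow> 'a \<Rightarrow> bool) \<Rightarrow> bool" where
  "in_B1m V E \<longleftrightarrow> (\<exists>P. EPG_rep V E P \<and> (\<forall>v\<in>V. monotonic (P v) \<and> num_bends (P v) \<le> 1))"

end

theory Submission
  imports Defs
begin


type_synonym shape = "bool \<times> int \<times> int \<times> nat \<times> nat"

definition hvpt :: "int \<Rightarrow> int \<Rightarrow> nat \<Rightarrow> nat \<Rightarrow> gpoint" where
  "hvpt x0 y0 l1 i = (x0 + int (min i l1), y0 + int (i - l1))"

definition hvpts :: "int \<Rightarrow> int \<Rightarrow> nat \<Rightarrow> nat \<Rightarrow> gpoint list" where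
  "hvpts x0 y0 l1 l2 = map (hvpt x0 y0 l1) [0..<l1+l2+1]"

fun pts :: "shape \<Rightarrow> gpoint list" where
  "pts (f,x0,y0,l1,l2) = (if f then map prod.swap (hvpts y0 x0 l1 l2) else hvpts x0 y0 l1 l2)"

fun valid :: "shape \<Rightarrow> bool" where "valid (f,x0,y0,l1,l2) = (1 \<le> l1 + l2)"

lemma hvpts_len: "length (hvpts x0 y0 l1 l2) = l1 + l2 + 1"
  by (simp add: hvpts_def)

lemma hvpts_nth: "i < l1 + l2 + 1 \<Longrightarrow> hvpts x0 y0 l1 l2 ! i = hvpt x0 y0 l1 i"
  by (simp add: hvpts_def del: upt_Suc)

lemma hv_grid_path: assumes "1 \<le> l1 + l2" shows "grid_path (hvpts x0 y0 l1 l2)"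
proof -
  have "grid_adj (hvpt x0 y0 l1 i) (hvpt x0 y0 l1 (i+1))" for i
    by (cases "i < l1") (auto simp: grid_adj_def hvpt_def)
  then show ?thesis
    unfolding grid_path_def using assms by (simp add: hvpts_len hvpts_nth)
qed

lemma hv_monotonic: "monotonic (hvpts x0 y0 l1 l2)"
  unfolding monotonic_def
proof (intro allI impI)
  fix i j assume a: "i \<le> j \<and> j < length (hvpts x0 y0 l1 l2)"
  then have "i < l1 + l2 + 1" "j < l1 + l2 + 1" by (auto simp: hvpts_len)
  moreover have "min i l1 \<le> min j l1" "i - l1 \<le> j - l1" using a by auto
  ultimately show "fst (hvpts x0 y0 l1 l2 ! i) \<le> fst (hvpts x0 y0 l1 l2 ! j) \<and>
        snd (hvpts x0 y0 l1 l2 ! i) \<le> snd (hvpts x0 y0 l1 l2 ! j)"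
    by (simp add: hvpts_nth hvpt_def)
qed

lemma hv_bends: "{i. is_bend (hvpts x0 y0 l1 l2) i} \<subseteq> {l1}"
proof
  fix i assume "i \<in> {i. is_bend (hvpts x0 y0 l1 l2) i}"
  then have b: "is_bend (hvpts x0 y0 l1 l2) i" by simp
  then have i: "0 < i" "i + 1 < l1 + l2 + 1" by (auto simp: is_bend_def hvpts_len)
  have e: "hvpts x0 y0 l1 l2 ! (i-1) = hvpt x0 y0 l1 (i-1)" "hvpts x0 y0 l1 l2 ! i = hvpt x0 y0 l1 i"
     "hvpts x0 y0 l1 l2 ! (i+1) = hvpt x0 y0 l1 (i+1)" using i by (auto simp: hvpts_nth)
  have "i = l1"
  proof (rule ccontr)
    assume "i \<noteq> l1"
    then consider "i < l1" | "i > l1" by linarith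
    then show False
    proof cases
      case 1
      then show False using b i unfolding is_bend_def e
        by (auto simp: hvpt_def horizontal_def vertical_def)
    next
      case 2
      then show False using b i unfolding is_bend_def e
        by (auto simp: hvpt_def horizontal_def vertical_def)
    qed
  qed
  then show "i \<in> {l1}" by simp
qed

lemma card_le1: "A \<subseteq> {a} \<Longrightarrow> card A \<le> 1"
  using card_mono[of "{a}" A] by simp

lemma hv_num_bends: "num_bends (hvpts x0 y0 l1 l2) \<le> 1"
  unfolding num_bends_def by (rule card_le1[OF hv_bends])

definition hedge :: "int \<Rightarrow> int \<Rightarrow> gpoint set" where "hedge x y = {(x,y),(x+1,y)}"
definition vedge :: "int \<Rightarrow> int \<Rightarrow> gpoint set" where "vedge x y = {(x,y),(x,y+1)}"

lemma hedge_inj: "hedge x y = hedge x' y' \<longleftrightarrow> x = x' \<and> y = y'"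
  unfolding hedge_def by (auto simp: doubleton_eq_iff)
lemma vedge_inj: "vedge x y = vedge x' y' \<longleftrightarrow> x = x' \<and> y = y'"
  unfolding vedge_def by (auto simp: doubleton_eq_iff)
lemma hedge_vedge: "hedge x y \<noteq> vedge x' y'"
  unfolding vedge_def hedge_def by (auto simp: doubleton_eq_iff)

lemma hv_edges: "path_edges (hvpts x0 y0 l1 l2) =
   {hedge x y0 | x. x0 \<le> x \<and> x < x0 + int l1} \<union> {vedge (x0 + int l1) y | y. y0 \<le> y \<and> y < y0 + int l2}"
  (is "?L = ?A \<union> ?B")
proof
  show "?L \<subseteq> ?A \<union> ?B"
  proof
    fix e assume "e \<in> ?L"
    then obtain i where i: "i + 1 < l1 + l2 + 1" and e: "e = {hvpt x0 y0 l1 i, hvpt x0 y0 l1 (i+1)}"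
      unfolding path_edges_def by (auto simp: hvpts_len hvpts_nth)
    show "e \<in> ?A \<union> ?B"
    proof (cases "i < l1")
      case True
      then have "e = hedge (x0 + int i) y0" unfolding e hvpt_def hedge_def by auto
      then show ?thesis using True by auto
    next
      case False
      then have "e = vedge (x0 + int l1) (y0 + int (i - l1))" unfolding e hvpt_def vedge_def
        by (auto simp: Suc_diff_le)
      then show ?thesis using False i by auto
    qed
  qed
next
  show "?A \<union> ?B \<subseteq> ?L"
  proof
    fix e assume "e \<in> ?A \<union> ?B"
    then consider x where "e = hedge x y0" "x0 \<le> x" "x < x0 + int l1"
      | y where "e = vedge (x0 + int l1) y" "y0 \<le> y" "y < y0 + int l2" by blast
    then show "e \<in> ?L"
    proof cases
      case 1
      define i where "i = nat (x - x0)"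
      have i: "i < l1" "x = x0 + int i" using 1 unfolding i_def by auto
      have "e = {hvpt x0 y0 l1 i, hvpt x0 y0 l1 (i+1)}"
        using i 1 unfolding hvpt_def hedge_def by auto
      moreover have "i + 1 < length (hvpts x0 y0 l1 l2)" using i by (simp add: hvpts_len)
      ultimately show ?thesis unfolding path_edges_def using i
        by (auto simp: hvpts_nth intro!: exI[of _ i])
    next
      case 2
      define i where "i = l1 + nat (y - y0)"
      have i: "i \<ge> l1" "i < l1 + l2" "y = y0 + int (i - l1)" using 2 unfolding i_def by auto
      have "e = {hvpt x0 y0 l1 i, hvpt x0 y0 l1 (i+1)}"
        using i 2 unfolding hvpt_def vedge_def by (auto simp: Suc_diff_le)
      moreover have "i + 1 < length (hvpts x0 y0 l1 l2)" using i by (simp add: hvpts_len)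
      ultimately show ?thesis unfolding path_edges_def using i
        by (auto simp: hvpts_nth intro!: exI[of _ i])
    qed
  qed
qed

lemma swap_grid_path: "grid_path ps \<Longrightarrow> grid_path (map prod.swap ps)"
  unfolding grid_path_def grid_adj_def by auto

lemma swap_monotonic: "monotonic ps \<Longrightarrow> monotonic (map prod.swap ps)"
  unfolding monotonic_def by auto

lemma swap_is_bend: "is_bend (map prod.swap ps) i = is_bend ps i"
  unfolding is_bend_def horizontal_def vertical_def by auto

lemma swap_num_bends: "num_bends (map prod.swap ps) = num_bends ps"
  unfolding num_bends_def swap_is_bend ..

lemma path_edges_img: "path_edges ps = (\<lambda>i. {ps!i, ps!(i+1)}) ` {i. i+1 < length ps}"
  unfolding path_edges_def by auto

lemma swap_path_edges: "path_edges (map prod.swap ps) = (\<lambda>e. prod.swap ` e) ` path_edges ps"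
  unfolding path_edges_img image_image by (rule image_cong) auto

fun hrow :: "shape \<Rightarrow> int" where "hrow (f,x0,y0,l1,l2) = (if f then y0 + int l1 else y0)"
fun hlo :: "shape \<Rightarrow> int" where "hlo (f,x0,y0,l1,l2) = x0"
fun hhi :: "shape \<Rightarrow> int" where "hhi (f,x0,y0,l1,l2) = (if f then x0 + int l2 else x0 + int l1)"
fun vcol :: "shape \<Rightarrow> int" where "vcol (f,x0,y0,l1,l2) = (if f then x0 else x0 + int l1)"
fun vlo :: "shape \<Rightarrow> int" where "vlo (f,x0,y0,l1,l2) = y0"
fun vhi :: "shape \<Rightarrow> int" where "vhi (f,x0,y0,l1,l2) = (if f then y0 + int l1 else y0 + int l2)"

definition Hs :: "shape \<Rightarrow> int \<Rightarrow> int \<Rightarrow> bool" where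
  "Hs s x y \<longleftrightarrow> y = hrow s \<and> hlo s \<le> x \<and> x < hhi s"
definition Vs :: "shape \<Rightarrow> int \<Rightarrow> int \<Rightarrow> bool" where
  "Vs s x y \<longleftrightarrow> x = vcol s \<and> vlo s \<le> y \<and> y < vhi s"

lemma pts_edges: "path_edges (pts s) = {hedge x y | x y. Hs s x y} \<union> {vedge x y | x y. Vs s x y}"
proof -
  obtain f x0 y0 l1 l2 where s: "s = (f,x0,y0,l1,l2)" by (cases s) auto
  show ?thesis
  proof (cases f)
    case True
    have sh: "prod.swap ` hedge a b = vedge b a" "prod.swap ` vedge a b = hedge b a" for a b
      unfolding hedge_def vedge_def by auto
    have i1: "(\<lambda>e. prod.swap ` e) ` {hedge x c | x. P x} = {vedge c x | x. P x}" for c P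
    proof -
      have "{hedge x c | x. P x} = (\<lambda>x. hedge x c) ` {x. P x}" "{vedge c x | x. P x} = (\<lambda>x. vedge c x) ` {x. P x}" by auto
      then show ?thesis by (simp add: image_image sh)
    qed
    have i2: "(\<lambda>e. prod.swap ` e) ` {vedge c x | x. P x} = {hedge x c | x. P x}" for c P
    proof -
      have "{hedge x c | x. P x} = (\<lambda>x. hedge x c) ` {x. P x}" "{vedge c x | x. P x} = (\<lambda>x. vedge c x) ` {x. P x}" by auto
      then show ?thesis by (simp add: image_image sh)
    qed
    show ?thesis using True unfolding s
      by (auto simp: swap_path_edges hv_edges image_Un i1 i2 Hs_def Vs_def)
  next
    case False
    then show ?thesis unfolding s by (auto simp: hv_edges Hs_def Vs_def)
  qed
qed

definition share :: "shape \<Rightarrow> shape \<Rightarrow> bool" where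
  "share s t \<longleftrightarrow> (\<exists>x y. Hs s x y \<and> Hs t x y) \<or> (\<exists>x y. Vs s x y \<and> Vs t x y)"

lemma pts_share: "path_edges (pts s) \<inter> path_edges (pts t) \<noteq> {} \<longleftrightarrow> share s t"
proof
  assume "path_edges (pts s) \<inter> path_edges (pts t) \<noteq> {}"
  then obtain e where "e \<in> path_edges (pts s)" "e \<in> path_edges (pts t)" by blast
  then show "share s t" unfolding pts_edges share_def
    using hedge_vedge by (auto simp: hedge_inj vedge_inj) metis+
next
  assume "share s t"
  then consider x y where "Hs s x y" "Hs t x y" | x y where "Vs s x y" "Vs t x y"
    unfolding share_def by blast
  then show "path_edges (pts s) \<inter> path_edges (pts t) \<noteq> {}"
  proof cases
    case 1
    then have "hedge x y \<in> path_edges (pts s) \<inter> path_edges (pts t)" unfolding pts_edges by blast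
    then show ?thesis by blast
  next
    case 2
    then have "vedge x y \<in> path_edges (pts s) \<inter> path_edges (pts t)" unfolding pts_edges by blast
    then show ?thesis by blast
  qed
qed

lemma share_iff: "share s t \<longleftrightarrow>
   (hrow s = hrow t \<and> max (hlo s) (hlo t) < min (hhi s) (hhi t)) \<or>
   (vcol s = vcol t \<and> max (vlo s) (vlo t) < min (vhi s) (vhi t))"
  unfolding share_def Hs_def Vs_def
  by (smt (verit))

lemma pts_good:
  assumes "valid s"
  shows "grid_path (pts s) \<and> monotonic (pts s) \<and> num_bends (pts s) \<le> 1"
proof -
  obtain f x0 y0 l1 l2 where s: "s = (f,x0,y0,l1,l2)" by (cases s) auto
  show ?thesis
  proof (cases f)
    case True
    then show ?thesis using assms hv_num_bends[of y0 x0 l1 l2] unfolding s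
      by (simp add: swap_grid_path swap_monotonic swap_num_bends hv_grid_path hv_monotonic)
  next
    case False
    then show ?thesis using assms hv_num_bends[of x0 y0 l1 l2] unfolding s
      by (simp add: hv_grid_path hv_monotonic)
  qed
qed


definition good_rep :: "'a set \<Rightarrow> ('a \<Rightarrow> 'a \<Rightarrow> bool) \<Rightarrow> ('a \<Rightarrow> shape) \<Rightarrow> bool" where
  "good_rep V E Q \<longleftrightarrow> (\<forall>v\<in>V. valid (Q v)) \<and> (\<forall>u\<in>V. \<forall>v\<in>V. u \<noteq> v \<longrightarrow> (E u v \<longleftrightarrow> share (Q u) (Q v)))"

definition hroot :: "'a set \<Rightarrow> ('a \<Rightarrow> shape) \<Rightarrow> 'a \<Rightarrow> bool" where
  "hroot V Q r \<longleftrightarrow> (\<forall>x y. \<not> Vs (Q r) x y) \<and>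
     (\<forall>v\<in>V-{r}. \<forall>x y x'. Hs (Q v) x y \<longrightarrow> Hs (Q r) x' y \<longrightarrow> Hs (Q r) x y)"

definition vroot :: "'a set \<Rightarrow> ('a \<Rightarrow> shape) \<Rightarrow> 'a \<Rightarrow> bool" where
  "vroot V Q r \<longleftrightarrow> (\<forall>x y. \<not> Hs (Q r) x y) \<and>
     (\<forall>v\<in>V-{r}. \<forall>x y y'. Vs (Q v) x y \<longrightarrow> Vs (Q r) x y' \<longrightarrow> Vs (Q r) x y)"

definition privs :: "'a set \<Rightarrow> ('a \<Rightarrow> shape) \<Rightarrow> bool" where
  "privs V Q \<longleftrightarrow> (\<forall>v\<in>V. (\<exists>x y. Hs (Q v) x y \<and> (\<forall>w\<in>V-{v}. \<not> Hs (Q w) x y)) \<or>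
                          (\<exists>x y. Vs (Q v) x y \<and> (\<forall>w\<in>V-{v}. \<not> Vs (Q w) x y)))"

definition Sinv :: "'a set \<Rightarrow> ('a \<Rightarrow> 'a \<Rightarrow> bool) \<Rightarrow> 'a \<Rightarrow> bool" where
  "Sinv V E r \<longleftrightarrow> (\<exists>Q. good_rep V E Q \<and> (hroot V Q r \<or> vroot V Q r) \<and> privs V Q)"

lemma good_rep_B1m: "good_rep V E Q \<Longrightarrow> in_B1m V E"
proof -
  assume g: "good_rep V E Q"
  have "EPG_rep V E (\<lambda>v. pts (Q v))"
    using g pts_good pts_share unfolding EPG_rep_def good_rep_def by blast
  moreover have "\<forall>v\<in>V. monotonic (pts (Q v)) \<and> num_bends (pts (Q v)) \<le> 1"
    using g pts_good unfolding good_rep_def by blast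
  ultimately show ?thesis unfolding in_B1m_def by blast
qed

lemma share_sym: "share s t \<longleftrightarrow> share t s"
  unfolding share_def by blast

lemma valid_nonempty: "valid s \<Longrightarrow> (\<exists>x y. Hs s x y) \<or> (\<exists>x y. Vs s x y)"
proof -
  assume v: "valid s"
  obtain f x0 y0 l1 l2 where s: "s = (f,x0,y0,l1,l2)" by (cases s) auto
  show ?thesis
  proof (cases "l1 = 0")
    case True
    then have "Vs s (vcol s) (vlo s) \<or> Hs s (hlo s) (hrow s)" using v unfolding s Vs_def Hs_def by auto
    then show ?thesis by blast
  next
    case False
    then have "Vs s (vcol s) (vlo s) \<or> Hs s (hlo s) (hrow s)" using v unfolding s Vs_def Hs_def by auto
    then show ?thesis by blast
  qed
qed

fun tr :: "shape \<Rightarrow> shape" where "tr (f,x0,y0,l1,l2) = (\<not> f, y0, x0, l1, l2)"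

lemma Hs_tr: "Hs (tr s) x y \<longleftrightarrow> Vs s y x"
  by (cases s) (auto simp: Hs_def Vs_def)
lemma Vs_tr: "Vs (tr s) x y \<longleftrightarrow> Hs s y x"
  by (cases s) (auto simp: Hs_def Vs_def)
lemma valid_tr: "valid (tr s) = valid s"
  by (cases s) auto
lemma share_tr: "share (tr s) (tr t) = share s t"
  unfolding share_def Hs_tr Vs_tr by blast

lemma Sinv_tr:
  assumes "good_rep V E Q" "hroot V Q r \<or> vroot V Q r" "privs V Q"
  shows "good_rep V E (tr \<circ> Q) \<and> (hroot V (tr \<circ> Q) r \<or> vroot V (tr \<circ> Q) r) \<and> privs V (tr \<circ> Q)"
proof (intro conjI)
  show "good_rep V E (tr \<circ> Q)" using assms(1) unfolding good_rep_def by (simp add: valid_tr share_tr)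
  show "hroot V (tr \<circ> Q) r \<or> vroot V (tr \<circ> Q) r"
    using assms(2) unfolding hroot_def vroot_def by (simp add: Hs_tr Vs_tr) blast
  show "privs V (tr \<circ> Q)"
    using assms(3) unfolding privs_def by (simp add: Hs_tr Vs_tr) blast
qed

fun scale :: "nat \<Rightarrow> shape \<Rightarrow> shape" where
  "scale N (f,x0,y0,l1,l2) = (f, int N * x0, int N * y0, N * l1, N * l2)"

lemma scale_acc: "hrow (scale N s) = int N * hrow s" "hlo (scale N s) = int N * hlo s"
  "hhi (scale N s) = int N * hhi s" "vcol (scale N s) = int N * vcol s"
  "vlo (scale N s) = int N * vlo s" "vhi (scale N s) = int N * vhi s"
  by (cases s; simp add: algebra_simps)+

lemma valid_scale: "N > 0 \<Longrightarrow> valid s \<Longrightarrow> valid (scale N s)"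
  by (cases s) (auto simp: distrib_left[symmetric])

lemma Hs_scale_mult: "N > 0 \<Longrightarrow> Hs (scale N s) (int N * a) (int N * b) \<longleftrightarrow> Hs s a b"
  unfolding Hs_def scale_acc by auto
lemma Vs_scale_mult: "N > 0 \<Longrightarrow> Vs (scale N s) (int N * a) (int N * b) \<longleftrightarrow> Vs s a b"
  unfolding Vs_def scale_acc by auto

lemma share_scale: "N > 0 \<Longrightarrow> share (scale N s) (scale N t) = share s t"
  unfolding share_iff scale_acc
  by (auto simp: max_def min_def mult_less_cancel_left)

fun shift :: "int \<Rightarrow> int \<Rightarrow> shape \<Rightarrow> shape" where
  "shift dx dy (f,x0,y0,l1,l2) = (f, x0 + dx, y0 + dy, l1, l2)"

lemma Hs_shift: "Hs (shift dx dy s) x y \<longleftrightarrow> Hs s (x - dx) (y - dy)"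
  by (cases s) (auto simp: Hs_def)
lemma Vs_shift: "Vs (shift dx dy s) x y \<longleftrightarrow> Vs s (x - dx) (y - dy)"
  by (cases s) (auto simp: Vs_def)
lemma valid_shift: "valid (shift dx dy s) = valid s"
  by (cases s) auto
lemma share_shift: "share (shift dx dy s) (shift dx dy t) = share s t"
proof -
  have a: "(\<exists>x y. P (x - dx) (y - dy)) \<longleftrightarrow> (\<exists>x y. P x y)" for P :: "int \<Rightarrow> int \<Rightarrow> bool"
    by (metis add_diff_cancel_right')
  show ?thesis unfolding share_def Hs_shift Vs_shift
    using a[of "\<lambda>x y. Hs s x y \<and> Hs t x y"] a[of "\<lambda>x y. Vs s x y \<and> Vs t x y"] by simp
qed

fun bnd :: "shape \<Rightarrow> int" where "bnd (f,x0,y0,l1,l2) = \<bar>x0\<bar> + \<bar>y0\<bar> + int l1 + int l2"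

lemma bnd_nonneg: "0 \<le> bnd s" by (cases s) auto

lemma Hs_bnd: "Hs s x y \<Longrightarrow> - bnd s \<le> x \<and> x + 1 \<le> bnd s \<and> - bnd s \<le> y \<and> y \<le> bnd s"
  by (cases s) (auto simp: Hs_def split: if_splits)
lemma Vs_bnd: "Vs s x y \<Longrightarrow> - bnd s \<le> x \<and> x \<le> bnd s \<and> - bnd s \<le> y \<and> y + 1 \<le> bnd s"
  by (cases s) (auto simp: Vs_def split: if_splits)


lemma ml1: "0 < (n::int) \<Longrightarrow> n*a \<le> x \<Longrightarrow> x < n*X + n \<Longrightarrow> a \<le> X"
proof (rule ccontr)
  assume h: "0 < n" "n*a \<le> x" "x < n*X + n" "\<not> a \<le> X"
  then have "X + 1 \<le> a" by simp
  then have "n*(X+1) \<le> n*a" using h(1) by (simp add: mult_left_mono)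
  then show False using h by (simp add: algebra_simps)
qed

lemma ml2: "0 < (n::int) \<Longrightarrow> n*X < x \<Longrightarrow> x < n*b \<Longrightarrow> X < b"
proof (rule ccontr)
  assume h: "0 < n" "n*X < x" "x < n*b" "\<not> X < b"
  then have "n*X < n*b" by linarith
  then have "X < b" using h(1) mult_less_cancel_left_pos[of n X b] by blast
  then show False using h by simp
qed

lemma ml3: "0 < (n::int) \<Longrightarrow> n*Y - n < n*h \<Longrightarrow> n*h < n*Y + n \<Longrightarrow> h = Y"
proof -
  assume h: "0 < n" "n*Y - n < n*h" "n*h < n*Y + n"
  have "h \<le> Y" using ml1[of n h "n*h" Y] h by simp
  moreover have "n*(Y - 1) < n*h" using h by (simp add: algebra_simps)
  then have "Y - 1 < h" using h mult_less_cancel_left_pos[of n "Y - 1" h] by simp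
  ultimately show "h = Y" by simp
qed

lemma ml4: "0 < (n::int) \<Longrightarrow> n*X < n*c \<Longrightarrow> n*c < n*X + n \<Longrightarrow> False"
proof -
  assume h: "0 < n" "n*X < n*c" "n*c < n*X + n"
  have "c \<le> X" using ml1[of n c "n*c" X] h by simp
  moreover have "X < c" using h mult_less_cancel_left_pos[of n X c] by simp
  ultimately show False by simp
qed

lemma Vs_scale_ne: "N > 0 \<Longrightarrow> Vs (scale N s) x y \<Longrightarrow> Vs s (vcol s) (vlo s)"
proof -
  assume a: "N > 0" "Vs (scale N s) x y"
  then have "int N * vlo s < int N * vhi s" unfolding Vs_def scale_acc by linarith
  then have "vlo s < vhi s" using a(1) mult_less_cancel_left_pos[of "int N"] by simp
  then show ?thesis unfolding Vs_def by simp
qed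
lemma Hs_scale_ne: "N > 0 \<Longrightarrow> Hs (scale N s) x y \<Longrightarrow> Hs s (hlo s) (hrow s)"
proof -
  assume a: "N > 0" "Hs (scale N s) x y"
  then have "int N * hlo s < int N * hhi s" unfolding Hs_def scale_acc by linarith
  then have "hlo s < hhi s" using a(1) mult_less_cancel_left_pos[of "int N"] by simp
  then show ?thesis unfolding Hs_def by simp
qed

lemma scale_lineH:
  assumes N: "N > 0" and l: "\<forall>a b a'. Hs s a b \<longrightarrow> Hs t a' b \<longrightarrow> Hs t a b"
    and h1: "Hs (scale N s) x y" and h2: "Hs (scale N t) x' y"
  shows "Hs (scale N t) x y"
proof -
  have s1: "Hs s (hlo s) (hrow s)" using Hs_scale_ne[OF N h1] .
  have t1: "Hs t (hlo t) (hrow t)" using Hs_scale_ne[OF N h2] .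
  have r: "hrow s = hrow t" using h1 h2 N unfolding Hs_def scale_acc by auto
  have s2: "Hs s (hhi s - 1) (hrow s)" using s1 unfolding Hs_def by auto
  have "Hs t (hlo s) (hrow s)" using l s1 t1 r by metis
  then have a: "hlo t \<le> hlo s" unfolding Hs_def by auto
  have "Hs t (hhi s - 1) (hrow s)" using l s2 t1 r by metis
  then have b: "hhi s \<le> hhi t" unfolding Hs_def by auto
  have "int N * hlo t \<le> int N * hlo s" "int N * hhi s \<le> int N * hhi t"
    using a b by (simp_all add: mult_left_mono)
  then show ?thesis using h1 r unfolding Hs_def scale_acc by auto
qed

lemma scale_lineV:
  assumes N: "N > 0" and l: "\<forall>a b b'. Vs s a b \<longrightarrow> Vs t a b' \<longrightarrow> Vs t a b"
    and h1: "Vs (scale N s) x y" and h2: "Vs (scale N t) x y'"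
  shows "Vs (scale N t) x y"
proof -
  have e: "scale N (tr u) = tr (scale N u)" for u by (cases u) auto
  have "Hs (scale N (tr t)) y x"
  proof (rule scale_lineH[of N "tr s" "tr t" y x y'])
    show "N > 0" by fact
    show "\<forall>a b a'. Hs (tr s) a b \<longrightarrow> Hs (tr t) a' b \<longrightarrow> Hs (tr t) a b"
      using l by (simp add: Hs_tr)
    show "Hs (scale N (tr s)) y x" "Hs (scale N (tr t)) y' x"
      using h1 h2 by (simp_all add: Hs_tr e)
  qed
  then show ?thesis by (simp add: Hs_tr e)
qed

lemma glue_core:
  fixes V1 V2 :: "'a set" and Q1 Q2 :: "'a \<Rightarrow> shape"
  assumes V12: "V1 \<inter> V2 = {c}" and fin2: "finite V2"
    and g1: "good_rep V1 E Q1" and g2: "good_rep V2 E Q2"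
    and nocross: "\<forall>u\<in>V1-{c}. \<forall>w\<in>V2-{c}. \<not> E u w \<and> \<not> E w u"
    and root1: "hroot V1 Q1 r \<or> vroot V1 Q1 r" and rV1: "r \<in> V1"
    and p1: "privs V1 Q1"
    and ce1: "Hs (Q1 c) X Y" and ce2: "\<forall>w\<in>V1-{c}. \<not> Hs (Q1 w) X Y"
    and root2: "hroot V2 Q2 c" and p2: "privs V2 Q2"
  shows "Sinv (V1 \<union> V2) E r"
proof -
  have cV1: "c \<in> V1" and cV2: "c \<in> V2" using V12 by auto
  define B where "B = (\<Sum>v\<in>V2. bnd (Q2 v))"
  have bB: "bnd (Q2 v) \<le> B" if "v \<in> V2" for v
    unfolding B_def using fin2 bnd_nonneg that by (intro member_le_sum) auto
  have B0: "0 \<le> B" unfolding B_def by (simp add: bnd_nonneg sum_nonneg)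
  have noVc: "\<not> Vs (Q2 c) x y" for x y using root2 unfolding hroot_def by blast
  have "valid (Q2 c)" using g2 cV2 unfolding good_rep_def by blast
  then obtain x0 Yc where c0: "Hs (Q2 c) x0 Yc" using valid_nonempty noVc by blast
  have Yc: "Yc = hrow (Q2 c)" using c0 unfolding Hs_def by simp
  have aYc: "- B \<le> Yc \<and> Yc \<le> B" using Hs_bnd[OF c0] bB[OF cV2] by linarith
  define n where "n = 2*B + 2"
  define N where "N = nat n"
  have Nn: "int N = n" "N > 0" "n > 0" unfolding N_def n_def using B0 by auto
  define dx where "dx = n*X + 1 + B"
  define dy where "dy = n*Y - Yc"
  define Q where "Q v = (if v \<in> V1 then scale N (Q1 v) else shift dx dy (Q2 v))" for v
  have gH: "n*X < x \<and> x < n*X + n - 1 \<and> n*Y - n < y \<and> y < n*Y + n"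
    if "w \<in> V2" "Hs (shift dx dy (Q2 w)) x y" for w x y
  proof -
    have "Hs (Q2 w) (x - dx) (y - dy)" using that Hs_shift by blast
    from Hs_bnd[OF this] bB[OF that(1)] aYc show ?thesis unfolding dx_def dy_def n_def by auto
  qed
  have gV: "n*X < x \<and> x < n*X + n"
    if "w \<in> V2" "Vs (shift dx dy (Q2 w)) x y" for w x y
  proof -
    have "Vs (Q2 w) (x - dx) (y - dy)" using that Vs_shift by blast
    from Vs_bnd[OF this] bB[OF that(1)] aYc show ?thesis unfolding dx_def dy_def n_def by auto
  qed
  have K1: "y = n*Y \<and> Hs s X Y"
    if "w \<in> V2" "Hs (scale N s) x y" "Hs (shift dx dy (Q2 w)) x y" for w s x y
  proof -
    have a: "y = n * hrow s" "n * hlo s \<le> x" "x < n * hhi s"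
      using that(2) unfolding Hs_def scale_acc Nn by auto
    have b: "n*X < x \<and> x < n*X + n - 1 \<and> n*Y - n < y \<and> y < n*Y + n" using gH that by blast
    have "hrow s = Y" using ml3[of n Y "hrow s"] a b Nn by simp
    moreover have "hlo s \<le> X" using ml1[of n "hlo s" x X] a b Nn by simp
    moreover have "X < hhi s" using ml2[of n X x "hhi s"] a b Nn by simp
    ultimately show ?thesis using a unfolding Hs_def by simp
  qed
  have K2: False
    if "w \<in> V2" "Vs (scale N s) x y" "Vs (shift dx dy (Q2 w)) x y'" for w s x y y'
  proof -
    have a: "x = n * vcol s" using that(2) unfolding Vs_def scale_acc Nn by auto
    show False using gV[OF that(1,3)] a ml4[of n X "vcol s"] Nn by simp
  qed
  have K3: "Hs (scale N (Q1 c)) x (n*Y)"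
    if "w \<in> V2" "Hs (shift dx dy (Q2 w)) x (n*Y)" for w x
  proof -
    have b: "n*X < x \<and> x < n*X + n - 1" using gH that by blast
    have c: "hrow (Q1 c) = Y" "hlo (Q1 c) \<le> X" "X + 1 \<le> hhi (Q1 c)" using ce1 unfolding Hs_def by auto
    have m1: "n * hlo (Q1 c) \<le> n * X" "n * (X+1) \<le> n * hhi (Q1 c)"
      using c Nn by (simp_all add: mult_left_mono)
    have "n * hlo (Q1 c) \<le> x" using m1(1) b by linarith
    moreover have "x < n * hhi (Q1 c)" using m1(2) b by (simp add: algebra_simps)
    ultimately show ?thesis using c unfolding Hs_def scale_acc Nn by simp
  qed
  have K5: "y = n*Y" if "Hs (shift dx dy (Q2 c)) x y" for x y
  proof -
    have "Hs (Q2 c) (x-dx) (y-dy)" using that Hs_shift by blast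
    then have "y - dy = Yc" using Yc unfolding Hs_def by simp
    then show ?thesis unfolding dy_def by simp
  qed
  have K4: "Hs (shift dx dy (Q2 c)) x (n*Y)"
    if "w \<in> V2" "Hs (shift dx dy (Q2 w)) x (n*Y)" for w x
  proof (cases "w = c")
    case True then show ?thesis using that by simp
  next
    case False
    have "Hs (Q2 w) (x - dx) Yc" using that(2) unfolding Hs_shift dy_def by simp
    then have "Hs (Q2 c) (x - dx) Yc" using root2 c0 False that(1) unfolding hroot_def by blast
    then show ?thesis unfolding Hs_shift dy_def by simp
  qed
  have mixed: "E u w \<longleftrightarrow> share (scale N (Q1 u)) (shift dx dy (Q2 w))"
    if u: "u \<in> V1" and w: "w \<in> V2" "w \<notin> V1" for u w
  proof (cases "u = c")
    case False
    have "\<not> share (scale N (Q1 u)) (shift dx dy (Q2 w))"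
    proof
      assume "share (scale N (Q1 u)) (shift dx dy (Q2 w))"
      then consider x y where "Hs (scale N (Q1 u)) x y" "Hs (shift dx dy (Q2 w)) x y"
        | x y where "Vs (scale N (Q1 u)) x y" "Vs (shift dx dy (Q2 w)) x y" unfolding share_def by blast
      then show False
      proof cases
        case 1 then show False using K1[OF w(1) 1] ce2 u False by blast
      next
        case 2 then show False using K2[OF w(1) 2] by blast
      qed
    qed
    moreover have "\<not> E u w" using nocross u w False cV1 by blast
    ultimately show ?thesis by simp
  next
    case True
    have wc: "w \<noteq> c" using w cV1 by blast
    have "E u w \<longleftrightarrow> share (shift dx dy (Q2 c)) (shift dx dy (Q2 w))"
      using g2 cV2 w(1) wc unfolding good_rep_def share_shift True by auto
    also have "\<dots> \<longleftrightarrow> share (scale N (Q1 c)) (shift dx dy (Q2 w))"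
    proof
      assume "share (shift dx dy (Q2 c)) (shift dx dy (Q2 w))"
      then obtain x y where h1: "Hs (shift dx dy (Q2 c)) x y" and h2: "Hs (shift dx dy (Q2 w)) x y"
        unfolding share_def Vs_shift using noVc by blast
      have yy: "y = n*Y" using K5[OF h1] .
      have "Hs (scale N (Q1 c)) x y" using K3[OF w(1)] h2 unfolding yy by blast
      then have "Hs (scale N (Q1 c)) x y" "Hs (shift dx dy (Q2 w)) x y" using h2 by auto
      then show "share (scale N (Q1 c)) (shift dx dy (Q2 w))"
        unfolding share_def by blast
    next
      assume "share (scale N (Q1 c)) (shift dx dy (Q2 w))"
      then obtain x y where h1: "Hs (scale N (Q1 c)) x y" and h2: "Hs (shift dx dy (Q2 w)) x y"
        unfolding share_def using K2[OF w(1)] by blast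
      have yy: "y = n*Y" using K1[OF w(1) h1 h2] by simp
      have "Hs (shift dx dy (Q2 c)) x y" using K4[OF w(1)] h2 unfolding yy by blast
      then have "Hs (shift dx dy (Q2 c)) x y" "Hs (shift dx dy (Q2 w)) x y" using h2 by auto
      then show "share (shift dx dy (Q2 c)) (shift dx dy (Q2 w))"
        unfolding share_def by blast
    qed
    finally show ?thesis using True by simp
  qed
  have mixed2: "E w u \<longleftrightarrow> E u w" if u: "u \<in> V1" and w: "w \<in> V2" "w \<notin> V1" for u w
  proof (cases "u = c")
    case True
    have "w \<noteq> c" using w cV1 by blast
    then have "E w c = share (Q2 w) (Q2 c)" "E c w = share (Q2 c) (Q2 w)"
      using g2 cV2 w unfolding good_rep_def by auto
    then show ?thesis using True share_sym by simp
  next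
    case False then show ?thesis using nocross u w cV1 by blast
  qed
  have good: "good_rep (V1 \<union> V2) E Q"
    unfolding good_rep_def
  proof (intro conjI ballI impI)
    fix v assume "v \<in> V1 \<union> V2"
    then show "valid (Q v)" using g1 g2 Nn unfolding good_rep_def Q_def
      by (auto simp: valid_scale valid_shift)
  next
    fix u v assume uv: "u \<in> V1 \<union> V2" "v \<in> V1 \<union> V2" "u \<noteq> v"
    show "E u v = share (Q u) (Q v)"
    proof (cases "u \<in> V1")
      case True
      show ?thesis
      proof (cases "v \<in> V1")
        case True
        then show ?thesis using \<open>u \<in> V1\<close> g1 uv Nn unfolding good_rep_def Q_def
          by (simp add: share_scale)
      next
        case False
        then show ?thesis using \<open>u \<in> V1\<close> uv mixed unfolding Q_def by simp
      qed
    next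
      case False
      show ?thesis
      proof (cases "v \<in> V1")
        case True
        then show ?thesis using False uv mixed mixed2 share_sym unfolding Q_def by simp
      next
        case False
        then show ?thesis using \<open>u \<notin> V1\<close> g2 uv unfolding good_rep_def Q_def
          by (simp add: share_shift)
      qed
    qed
  qed
  have root: "hroot (V1 \<union> V2) Q r \<or> vroot (V1 \<union> V2) Q r"
    using root1
  proof
    assume h: "hroot V1 Q1 r"
    have "hroot (V1 \<union> V2) Q r"
      unfolding hroot_def
    proof (intro conjI allI ballI impI)
      fix x y show "\<not> Vs (Q r) x y"
      proof
        assume "Vs (Q r) x y"
        then have "Vs (scale N (Q1 r)) x y" using rV1 unfolding Q_def by simp
        then have "Vs (Q1 r) (vcol (Q1 r)) (vlo (Q1 r))" using Vs_scale_ne[OF Nn(2)] by blast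
        then show False using h unfolding hroot_def by blast
      qed
    next
      fix v x y x' assume v: "v \<in> V1 \<union> V2 - {r}" and a: "Hs (Q v) x y" "Hs (Q r) x' y"
      have ar: "Hs (scale N (Q1 r)) x' y" using a(2) rV1 unfolding Q_def by simp
      show "Hs (Q r) x y"
      proof (cases "v \<in> V1")
        case True
        have l: "\<forall>a b a'. Hs (Q1 v) a b \<longrightarrow> Hs (Q1 r) a' b \<longrightarrow> Hs (Q1 r) a b"
          using h v True unfolding hroot_def by blast
        show ?thesis using scale_lineH[OF Nn(2) l] a True rV1 unfolding Q_def by simp
      next
        case False
        then have vV2: "v \<in> V2" and av: "Hs (shift dx dy (Q2 v)) x y" using v a unfolding Q_def by auto
        have b: "n*Y - n < y \<and> y < n*Y + n" using gH[OF vV2 av] by blast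
        have r1: "Hs (Q1 r) (hlo (Q1 r)) (hrow (Q1 r))" using Hs_scale_ne[OF Nn(2) ar] .
        have "y = n * hrow (Q1 r)" using ar unfolding Hs_def scale_acc Nn by simp
        then have hr: "hrow (Q1 r) = Y" using ml3[of n Y "hrow (Q1 r)"] b Nn by simp
        then have yY: "y = n*Y" using \<open>y = n * hrow (Q1 r)\<close> by simp
        show ?thesis
        proof (cases "r = c")
          case True
          then show ?thesis using K3[OF vV2] av yY rV1 unfolding Q_def by simp
        next
          case False
          have "Hs (Q1 r) X Y" using h cV1 False ce1 r1 hr unfolding hroot_def by blast
          then show ?thesis using ce2 rV1 False by blast
        qed
      qed
    qed
    then show ?thesis by blast
  next
    assume h: "vroot V1 Q1 r"
    have "vroot (V1 \<union> V2) Q r"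
      unfolding vroot_def
    proof (intro conjI allI ballI impI)
      fix x y show "\<not> Hs (Q r) x y"
      proof
        assume "Hs (Q r) x y"
        then have "Hs (scale N (Q1 r)) x y" using rV1 unfolding Q_def by simp
        then have "Hs (Q1 r) (hlo (Q1 r)) (hrow (Q1 r))" using Hs_scale_ne[OF Nn(2)] by blast
        then show False using h unfolding vroot_def by blast
      qed
    next
      fix v x y y' assume v: "v \<in> V1 \<union> V2 - {r}" and a: "Vs (Q v) x y" "Vs (Q r) x y'"
      have ar: "Vs (scale N (Q1 r)) x y'" using a(2) rV1 unfolding Q_def by simp
      show "Vs (Q r) x y"
      proof (cases "v \<in> V1")
        case True
        have l: "\<forall>a b b'. Vs (Q1 v) a b \<longrightarrow> Vs (Q1 r) a b' \<longrightarrow> Vs (Q1 r) a b"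
          using h v True unfolding vroot_def by blast
        show ?thesis using scale_lineV[OF Nn(2) l] a True rV1 unfolding Q_def by simp
      next
        case False
        then have vV2: "v \<in> V2" and av: "Vs (shift dx dy (Q2 v)) x y" using v a unfolding Q_def by auto
        then show ?thesis using K2[OF vV2 ar] by blast
      qed
    qed
    then show ?thesis by blast
  qed
  have priv: "privs (V1 \<union> V2) Q"
    unfolding privs_def
  proof
    fix v assume v: "v \<in> V1 \<union> V2"
    show "(\<exists>x y. Hs (Q v) x y \<and> (\<forall>w\<in>V1 \<union> V2 - {v}. \<not> Hs (Q w) x y)) \<or>
          (\<exists>x y. Vs (Q v) x y \<and> (\<forall>w\<in>V1 \<union> V2 - {v}. \<not> Vs (Q w) x y))"
    proof (cases "v \<in> V1")
      case vV1: True
      show ?thesis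
      proof (cases "v = c")
        case True
        have "Hs (scale N (Q1 v)) (int N * X) (int N * Y)" using Hs_scale_mult[OF Nn(2)] ce1 True by simp
        then have "Hs (Q v) (n*X) (n*Y)" using Nn(1) vV1 unfolding Q_def by simp
        moreover have "\<not> Hs (Q w) (n*X) (n*Y)" if "w \<in> V1 \<union> V2 - {v}" for w
        proof (cases "w \<in> V1")
          case True
          then show ?thesis using ce2 that \<open>v = c\<close> Hs_scale_mult[OF Nn(2)] Nn unfolding Q_def by auto
        next
          case False
          then show ?thesis using gH[of w "n*X" "n*Y"] that unfolding Q_def by auto
        qed
        ultimately show ?thesis by blast
      next
        case False
        from p1 vV1 consider a b where "Hs (Q1 v) a b" "\<forall>w\<in>V1-{v}. \<not> Hs (Q1 w) a b"
          | a b where "Vs (Q1 v) a b" "\<forall>w\<in>V1-{v}. \<not> Vs (Q1 w) a b"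
          unfolding privs_def by blast
        then show ?thesis
        proof cases
          case 1
          have "Hs (scale N (Q1 v)) (int N * a) (int N * b)" using Hs_scale_mult[OF Nn(2)] 1 by simp
          then have "Hs (Q v) (n*a) (n*b)" using Nn(1) vV1 unfolding Q_def by simp
          moreover have "\<not> Hs (Q w) (n*a) (n*b)" if "w \<in> V1 \<union> V2 - {v}" for w
          proof (cases "w \<in> V1")
            case True
            then show ?thesis using 1 that Hs_scale_mult[OF Nn(2)] Nn unfolding Q_def by auto
          next
            case wn: False
            show ?thesis
            proof
              assume "Hs (Q w) (n*a) (n*b)"
              then have "Hs (shift dx dy (Q2 w)) (n*a) (n*b)" using wn unfolding Q_def by simp
              moreover have "Hs (scale N (Q1 v)) (n*a) (n*b)" using \<open>Hs (Q v) (n*a) (n*b)\<close> vV1 unfolding Q_def by simp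
              moreover have "w \<in> V2" using that wn by blast
              ultimately have "Hs (Q1 v) X Y" using K1 by blast
              then show False using ce2 vV1 False by blast
            qed
          qed
          ultimately show ?thesis by blast
        next
          case 2
          have "Vs (scale N (Q1 v)) (int N * a) (int N * b)" using Vs_scale_mult[OF Nn(2)] 2 by simp
          then have "Vs (Q v) (n*a) (n*b)" using Nn(1) vV1 unfolding Q_def by simp
          moreover have "\<not> Vs (Q w) (n*a) (n*b)" if "w \<in> V1 \<union> V2 - {v}" for w
          proof (cases "w \<in> V1")
            case True
            then show ?thesis using 2 that Vs_scale_mult[OF Nn(2)] Nn unfolding Q_def by auto
          next
            case wn: False
            show ?thesis
            proof
              assume "Vs (Q w) (n*a) (n*b)"
              then have "Vs (shift dx dy (Q2 w)) (n*a) (n*b)" using wn unfolding Q_def by simp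
              moreover have "Vs (scale N (Q1 v)) (n*a) (n*b)" using \<open>Vs (Q v) (n*a) (n*b)\<close> vV1 unfolding Q_def by simp
              moreover have "w \<in> V2" using that wn by blast
              ultimately show False using K2 by blast
            qed
          qed
          ultimately show ?thesis by blast
        qed
      qed
    next
      case vn: False
      then have vV2: "v \<in> V2" using v by blast
      have vc: "v \<noteq> c" using vn cV1 by blast
      from p2 vV2 consider a b where "Hs (Q2 v) a b" "\<forall>w\<in>V2-{v}. \<not> Hs (Q2 w) a b"
        | a b where "Vs (Q2 v) a b" "\<forall>w\<in>V2-{v}. \<not> Vs (Q2 w) a b"
        unfolding privs_def by blast
      then show ?thesis
      proof cases
        case 1
        have hv: "Hs (shift dx dy (Q2 v)) (a+dx) (b+dy)" using 1 Hs_shift by simp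
        then have "Hs (Q v) (a+dx) (b+dy)" using vn unfolding Q_def by simp
        moreover have "\<not> Hs (Q w) (a+dx) (b+dy)" if w: "w \<in> V1 \<union> V2 - {v}" for w
        proof (cases "w \<in> V1")
          case True
          show ?thesis
          proof
            assume "Hs (Q w) (a+dx) (b+dy)"
            then have hw: "Hs (scale N (Q1 w)) (a+dx) (b+dy)" using True unfolding Q_def by simp
            from K1[OF vV2 hw hv] have e: "b + dy = n*Y" "Hs (Q1 w) X Y" by auto
            then have wc: "w = c" using ce2 True by blast
            have "b = Yc" using e(1) unfolding dy_def by simp
            then have "Hs (Q2 c) a Yc" using root2 1(1) c0 vV2 vc unfolding hroot_def by blast
            then show False using 1(2) cV2 vc \<open>b = Yc\<close> by blast
          qed
        next
          case False
          then show ?thesis using 1 w unfolding Q_def by (simp add: Hs_shift)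
        qed
        ultimately show ?thesis by blast
      next
        case 2
        have hv: "Vs (shift dx dy (Q2 v)) (a+dx) (b+dy)" using 2 Vs_shift by simp
        then have "Vs (Q v) (a+dx) (b+dy)" using vn unfolding Q_def by simp
        moreover have "\<not> Vs (Q w) (a+dx) (b+dy)" if w: "w \<in> V1 \<union> V2 - {v}" for w
        proof (cases "w \<in> V1")
          case True
          show ?thesis
          proof
            assume "Vs (Q w) (a+dx) (b+dy)"
            then have "Vs (scale N (Q1 w)) (a+dx) (b+dy)" using True unfolding Q_def by simp
            then show False using K2[OF vV2 _ hv] by blast
          qed
        next
          case False
          then show ?thesis using 2 w unfolding Q_def by (simp add: Vs_shift)
        qed
        ultimately show ?thesis by blast
      qed
    qed
  qed
  show ?thesis unfolding Sinv_def using good root priv by blast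
qed


definition restr :: "('a \<Rightarrow> 'a \<Rightarrow> bool) \<Rightarrow> 'a set \<Rightarrow> 'a \<Rightarrow> 'a \<Rightarrow> bool" where
  "restr E S x y \<longleftrightarrow> E x y \<and> x \<in> S \<and> y \<in> S"

definition walk :: "('a \<Rightarrow> 'a \<Rightarrow> bool) \<Rightarrow> 'a list \<Rightarrow> bool" where
  "walk R xs \<longleftrightarrow> (\<forall>i. Suc i < length xs \<longrightarrow> R (xs!i) (xs!Suc i))"

lemma leave:
  assumes "R\<^sup>*\<^sup>* a b" "a \<in> S" "b \<notin> S"
  shows "\<exists>p q. R p q \<and> p \<in> S \<and> q \<notin> S"
  using assms by (induction rule: rtranclp_induct) auto

lemma rtranclp_sym:
  assumes "\<And>x y. R x y \<Longrightarrow> R y x" "R\<^sup>*\<^sup>* a b"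
  shows "R\<^sup>*\<^sup>* b a"
  using assms(2)
proof (induction rule: rtranclp_induct)
  case base then show ?case by simp
next
  case (step y z)
  then show ?case using assms(1) by (meson converse_rtranclp_into_rtranclp)
qed

lemma walk_take: "walk R xs \<Longrightarrow> walk R (take k xs)"
  unfolding walk_def by auto

lemma walk_snoc: "walk R xs \<Longrightarrow> xs \<noteq> [] \<Longrightarrow> R (last xs) c \<Longrightarrow> walk R (xs @ [c])"
  unfolding walk_def
proof (intro allI impI)
  fix i assume w: "\<forall>i. Suc i < length xs \<longrightarrow> R (xs ! i) (xs ! Suc i)" and ne: "xs \<noteq> []"
    and l: "R (last xs) c" and i: "Suc i < length (xs @ [c])"
  show "R ((xs @ [c]) ! i) ((xs @ [c]) ! Suc i)"
  proof (cases "Suc i < length xs")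
    case True then show ?thesis using w by (simp add: nth_append)
  next
    case False
    then have "i = length xs - 1" using i by simp
    then show ?thesis using l ne by (simp add: nth_append last_conv_nth)
  qed
qed

lemma path_exists:
  assumes "R\<^sup>*\<^sup>* a b"
  shows "\<exists>xs. xs \<noteq> [] \<and> hd xs = a \<and> last xs = b \<and> distinct xs \<and> walk R xs"
  using assms
proof (induction rule: rtranclp_induct)
  case base
  then show ?case by (intro exI[of _ "[a]"]) (auto simp: walk_def)
next
  case (step b c)
  then obtain xs where xs: "xs \<noteq> []" "hd xs = a" "last xs = b" "distinct xs" "walk R xs" by blast
  show ?case
  proof (cases "c \<in> set xs")
    case True
    then obtain k where k: "k < length xs" "xs ! k = c" by (meson in_set_conv_nth)
    let ?ys = "take (Suc k) xs"
    have "last ?ys = c" using k by (simp add: take_Suc_conv_app_nth)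
    moreover have "?ys \<noteq> []" "hd ?ys = a" "distinct ?ys" "walk R ?ys"
      using xs k by (auto simp: walk_take hd_take)
    ultimately have "?ys \<noteq> []" "hd ?ys = a" "last ?ys = c" "distinct ?ys" "walk R ?ys" by auto
    then show ?thesis by blast
  next
    case False
    have "xs @ [c] \<noteq> []" "hd (xs @ [c]) = a" "last (xs @ [c]) = c" "distinct (xs @ [c])" "walk R (xs @ [c])"
      using xs False step(2) by (auto simp: walk_snoc)
    then show ?thesis by blast
  qed
qed

lemma walk_mono: "walk R xs \<Longrightarrow> (\<And>x y. R x y \<Longrightarrow> R' x y) \<Longrightarrow> walk R' xs"
  unfolding walk_def by blast

lemma walk_set:
  assumes "walk R xs" "xs \<noteq> []" "hd xs \<in> S" "\<And>x y. R x y \<Longrightarrow> y \<in> S"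
  shows "set xs \<subseteq> S"
proof
  fix x assume "x \<in> set xs"
  then obtain i where i: "i < length xs" "xs ! i = x" by (meson in_set_conv_nth)
  show "x \<in> S"
  proof (cases i)
    case 0 then show ?thesis using i assms(2,3) by (simp add: hd_conv_nth)
  next
    case (Suc j)
    then have "Suc j < length xs" using i by simp
    then have "R (xs ! j) (xs ! Suc j)" using assms(1) unfolding walk_def by blast
    then show ?thesis using assms(4) i Suc by simp
  qed
qed

lemma mk_cycle:
  assumes "v \<notin> set P" "distinct P" "walk E P" "2 \<le> length P" "E v (hd P)" "E (last P) v"
    "set P \<subseteq> V" "v \<in> V"
  shows "simple_cycle V E (v # P)"
  unfolding simple_cycle_def
proof (intro conjI allI impI)
  show "3 \<le> length (v # P)" using assms(4) by simp
  show "distinct (v # P)" using assms(1,2) by simp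
  show "set (v # P) \<subseteq> V" using assms(7,8) by simp
  fix i assume i: "i < length (v # P)"
  show "E ((v # P) ! i) ((v # P) ! ((i + 1) mod length (v # P)))"
  proof (cases "i = 0")
    case True
    then show ?thesis using assms(4,5) by (cases P) auto
  next
    case False
    show ?thesis
    proof (cases "i = length P")
      case True
      then have "(i + 1) mod length (v # P) = 0" by simp
      moreover have "(v # P) ! i = last P" using True False by (simp add: last_conv_nth)
      ultimately show ?thesis using assms(6) by simp
    next
      case False2: False
      then have "(i + 1) mod length (v # P) = i + 1" using i by simp
      moreover obtain j where j: "i = Suc j" using False by (cases i) auto
      moreover have "Suc j < length P" using i False2 j by simp
      ultimately show ?thesis using assms(3) unfolding walk_def by simp
    qed
  qed
qed

lemma cyc_v_edge:
  assumes "v \<notin> set P" "P \<noteq> []" "{v, z} \<in> cycle_edges (v # P)"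
  shows "z = v \<or> z = hd P \<or> z = last P"
proof -
  let ?C = "v # P"
  obtain i where i: "i < length ?C" and e: "{v, z} = {?C ! i, ?C ! ((i+1) mod length ?C)}"
    using assms(3) unfolding cycle_edges_def by blast
  have only0: "k = 0" if "k < length ?C" "?C ! k = v" for k
  proof (rule ccontr)
    assume "k \<noteq> 0"
    then obtain j where "k = Suc j" by (cases k) auto
    then have "P ! j = v" "j < length P" using that by auto
    then show False using assms(1) by (metis nth_mem)
  qed
  have "v \<in> {?C ! i, ?C ! ((i+1) mod length ?C)}" using e by blast
  then consider "?C ! i = v" | "?C ! ((i+1) mod length ?C) = v" by auto
  then show ?thesis
  proof cases
    case 1
    then have "i = 0" using only0 i by blast
    then have "{v, z} = {v, hd P}" using e assms(2) by (simp add: hd_conv_nth)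
    then show ?thesis by (auto simp: doubleton_eq_iff)
  next
    case 2
    have "(i+1) mod length ?C < length ?C" by simp
    then have "(i+1) mod length ?C = 0" using only0 2 by blast
    then have z: "(i+1) mod length ?C = 0" .
    have "i = length P"
    proof (rule ccontr)
      assume "i \<noteq> length P"
      then have "i + 1 < length ?C" using i by simp
      then have "(i+1) mod length ?C = i+1" by simp
      then show False using z by simp
    qed
    then have "?C ! i = last P" using assms(2) by (simp add: last_conv_nth)
    then have "{v, z} = {last P, v}" using e 2 by simp
    then show ?thesis by (auto simp: doubleton_eq_iff)
  qed
qed

lemma cactus_sg:
  assumes "cactus V E"
  shows "finite V" "\<And>x y. E x y \<Longrightarrow> E y x" "\<And>x. \<not> E x x" "\<And>x y. E x y \<Longrightarrow> x \<in> V" "\<And>x y. E x y \<Longrightarrow> y \<in> V"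
    "V \<noteq> {}" "\<And>u v. u \<in> V \<Longrightarrow> v \<in> V \<Longrightarrow> E\<^sup>*\<^sup>* u v"
proof -
  have sg: "simple_graph V E" and ne: "V \<noteq> {}" and co: "\<forall>u\<in>V. \<forall>v\<in>V. E\<^sup>*\<^sup>* u v"
    using assms unfolding cactus_def connected_graph_def by auto
  show "finite V" using sg unfolding simple_graph_def by auto
  show "\<And>x y. E x y \<Longrightarrow> E y x" using sg unfolding simple_graph_def by auto
  show "\<And>x. \<not> E x x" using sg unfolding simple_graph_def by auto
  show "\<And>x y. E x y \<Longrightarrow> x \<in> V" using sg unfolding simple_graph_def by auto
  show "\<And>x y. E x y \<Longrightarrow> y \<in> V" using sg unfolding simple_graph_def by auto
  show "V \<noteq> {}" by fact
  show "\<And>u v. u \<in> V \<Longrightarrow> v \<in> V \<Longrightarrow> E\<^sup>*\<^sup>* u v" using co by auto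
qed

lemma cactus_cyc:
  assumes "cactus V E" "simple_cycle V E c1" "simple_cycle V E c2" "cycle_edges c1 \<noteq> cycle_edges c2"
  shows "card (set c1 \<inter> set c2) \<le> 1"
  using assms unfolding cactus_def by blast

lemma restr_path:
  assumes "(restr E S)\<^sup>*\<^sup>* a b" "a \<noteq> b"
  shows "\<exists>P. distinct P \<and> walk E P \<and> hd P = a \<and> last P = b \<and> set P \<subseteq> S \<and> 2 \<le> length P"
proof -
  obtain xs where xs: "xs \<noteq> []" "hd xs = a" "last xs = b" "distinct xs" "walk (restr E S) xs"
    using path_exists[OF assms(1)] by blast
  have "a \<in> S"
  proof (rule converse_rtranclpE[OF assms(1)])
    assume "a = b" then show ?thesis using assms(2) by simp
  next
    fix y assume "restr E S a y" then show "a \<in> S" unfolding restr_def by simp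
  qed
  then have "set xs \<subseteq> S" using walk_set[OF xs(5) xs(1)] xs(2) unfolding restr_def by blast
  moreover have "walk E xs" using xs(5) walk_mono unfolding restr_def by fastforce
  moreover have "2 \<le> length xs"
  proof (rule ccontr)
    assume "\<not> 2 \<le> length xs"
    moreover have "0 < length xs" using xs(1) by simp
    ultimately have "length xs = 1" by linarith
    then obtain z where "xs = [z]" by (metis One_nat_def length_0_conv length_Suc_conv)
    then have "hd xs = last xs" by simp
    then show False using xs assms(2) by simp
  qed
  ultimately show ?thesis using xs by blast
qed

lemma no3:
  assumes cac: "cactus V E" and v: "v \<in> V"
    and nc: "\<forall>x\<in>V-{v}. \<forall>y\<in>V-{v}. (restr E (V-{v}))\<^sup>*\<^sup>* x y"
    and d: "a \<noteq> b" "a \<noteq> c" "b \<noteq> c" and e: "E v a" "E v b" "E v c"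
  shows False
proof -
  note sg = cactus_sg[OF cac]
  have inV1: "a \<in> V" "b \<in> V" "c \<in> V" using e sg(5) by auto
  have inV2: "a \<noteq> v" "b \<noteq> v" "c \<noteq> v" using e sg(3) by auto
  have inV: "a \<in> V - {v}" "b \<in> V - {v}" "c \<in> V - {v}" using inV1 inV2 by auto
  have r1: "(restr E (V-{v}))\<^sup>*\<^sup>* a b" using nc inV by blast
  obtain P where P: "distinct P" "walk E P" "hd P = a" "last P = b" "set P \<subseteq> V - {v}" "2 \<le> length P"
    using restr_path[OF r1 d(1)] by blast
  have r2: "(restr E (V-{v}))\<^sup>*\<^sup>* c a" using nc inV by blast
  obtain W where W: "distinct W" "walk E W" "hd W = c" "last W = a" "set W \<subseteq> V - {v}" "2 \<le> length W"
    using restr_path[OF r2] d(2) by metis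
  have vP: "v \<notin> set P" "v \<notin> set W" using P(5) W(5) by auto
  have sP: "set P \<subseteq> V" "set W \<subseteq> V" using P(5) W(5) by auto
  have C1: "simple_cycle V E (v # P)"
    using mk_cycle[OF vP(1) P(1) P(2) P(6) _ _ sP(1) v] P(3,4) e sg(2) by simp
  have C2: "simple_cycle V E (v # W)"
    using mk_cycle[OF vP(2) W(1) W(2) W(6) _ _ sP(2) v] W(3,4) e sg(2) by simp
  have Pne: "P \<noteq> []" "W \<noteq> []"
  proof -
    show "P \<noteq> []" proof assume "P = []" then show False using P(6) by simp qed
    show "W \<noteq> []" proof assume "W = []" then show False using W(6) by simp qed
  qed
  have "{v, c} \<in> cycle_edges (v # W)"
  proof -
    have "(0 + 1) mod length (v # W) = 1" using Pne(2) by (cases W) auto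
    then have "{(v#W) ! 0, (v#W) ! ((0 + 1) mod length (v # W))} = {v, c}"
      using W Pne by (simp add: hd_conv_nth)
    then have "{v, c} = {(v#W) ! 0, (v#W) ! ((0 + 1) mod length (v # W))} \<and> (0::nat) < length (v # W)"
      by simp
    then show ?thesis unfolding cycle_edges_def by (intro CollectI exI[of _ 0])
  qed
  moreover have "{v, c} \<notin> cycle_edges (v # P)"
  proof
    assume "{v, c} \<in> cycle_edges (v # P)"
    then have "c = v \<or> c = hd P \<or> c = last P" using cyc_v_edge[of v P c] P Pne by blast
    then show False using P d inV by auto
  qed
  ultimately have "cycle_edges (v # P) \<noteq> cycle_edges (v # W)" by blast
  then have le: "card (set (v # P) \<inter> set (v # W)) \<le> 1" using cactus_cyc[OF cac C1 C2] by blast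
  have "{v, a} \<subseteq> set (v # P) \<inter> set (v # W)"
    using P W Pne by (auto simp: hd_in_set last_in_set) (metis last_in_set)
  then have "card {v, a} \<le> card (set (v # P) \<inter> set (v # W))" by (intro card_mono) auto
  moreover have "card {v, a} = 2" using inV by auto
  ultimately show False using le by simp
qed

lemma cyc_restr: "simple_cycle S (restr E S) c \<Longrightarrow> S \<subseteq> V \<Longrightarrow> simple_cycle V E c"
  unfolding simple_cycle_def restr_def by auto

lemma sub_cactus:
  assumes cac: "cactus V E" and S: "S \<subseteq> V" "S \<noteq> {}" and co: "\<forall>x\<in>S. \<forall>y\<in>S. (restr E S)\<^sup>*\<^sup>* x y"
  shows "cactus S (restr E S)"
proof -
  note sg = cactus_sg[OF cac]
  have "simple_graph S (restr E S)"
    unfolding simple_graph_def restr_def using sg S finite_subset by blast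
  then have "connected_graph S (restr E S)" unfolding connected_graph_def using S co by blast
  moreover have "card (set c1 \<inter> set c2) \<le> 1"
    if "simple_cycle S (restr E S) c1" "simple_cycle S (restr E S) c2" "cycle_edges c1 \<noteq> cycle_edges c2" for c1 c2
    using cactus_cyc[OF cac cyc_restr[OF that(1) S(1)] cyc_restr[OF that(2) S(1)] that(3)] .
  ultimately show ?thesis unfolding cactus_def by blast
qed

lemma rtranclp_restr_mono: "(restr E A)\<^sup>*\<^sup>* x y \<Longrightarrow> A \<subseteq> B \<Longrightarrow> (restr E B)\<^sup>*\<^sup>* x y"
proof -
  assume a: "(restr E A)\<^sup>*\<^sup>* x y" "A \<subseteq> B"
  have "\<And>u v. restr E A u v \<Longrightarrow> restr E B u v" using a(2) unfolding restr_def by auto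
  then show ?thesis using a(1) by (metis mono_rtranclp)
qed

lemma restr_symm: "(\<And>x y. E x y \<Longrightarrow> E y x) \<Longrightarrow> restr E S x y \<Longrightarrow> restr E S y x"
  unfolding restr_def by blast

lemma cut_split:
  assumes cac: "cactus V E" and c: "c \<in> V" and x0: "x0 \<in> V - {c}" and y0: "y0 \<in> V - {c}"
    and nr: "\<not> (restr E (V - {c}))\<^sup>*\<^sup>* x0 y0"
  shows "\<exists>V1 V2. V = V1 \<union> V2 \<and> V1 \<inter> V2 = {c} \<and> card V1 < card V \<and> card V2 < card V \<and>
     cactus V1 (restr E V1) \<and> cactus V2 (restr E V2) \<and> c \<in> V1 \<and> c \<in> V2 \<and>
     (\<forall>u\<in>V1-{c}. \<forall>w\<in>V2-{c}. \<not> E u w \<and> \<not> E w u)"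
proof -
  note sg = cactus_sg[OF cac]
  define R where "R = restr E (V - {c})"
  have Rsym: "R y x" if "R x y" for x y using that restr_symm[of E] sg(2) unfolding R_def by blast
  define comp where "comp x = {z. R\<^sup>*\<^sup>* x z}" for x
  have reach_in: "z \<in> V - {c}" if "R\<^sup>*\<^sup>* x z" "x \<in> V - {c}" for x z
    using that by (induction rule: rtranclp_induct) (auto simp: R_def restr_def)
  have comp_sub: "comp x \<subseteq> V - {c}" if "x \<in> V - {c}" for x
    using reach_in that unfolding comp_def by blast
  have comp_walk: "(restr E (comp x \<union> {c}))\<^sup>*\<^sup>* x z" if "R\<^sup>*\<^sup>* x z" for x z
    using that
  proof (induction rule: rtranclp_induct)
    case base then show ?case by simp
  next
    case (step y z)
    have "restr E (comp x \<union> {c}) y z"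
      using step(1,2) unfolding restr_def comp_def R_def by (auto intro: rtranclp.rtrancl_into_rtrancl)
    then show ?case using step(3) by (meson rtranclp.rtrancl_into_rtrancl)
  qed
  have comp_c: "(restr E (comp x \<union> {c}))\<^sup>*\<^sup>* x c" if x: "x \<in> V - {c}" for x
  proof -
    have "E\<^sup>*\<^sup>* x c" using sg(7) x c by blast
    moreover have "x \<in> comp x" unfolding comp_def by simp
    moreover have "c \<notin> comp x" using comp_sub[OF x] by blast
    ultimately obtain p q where pq: "E p q" "p \<in> comp x" "q \<notin> comp x" using leave by metis
    have pV: "p \<in> V - {c}" using comp_sub[OF x] pq(2) by blast
    have "q = c"
    proof (rule ccontr)
      assume "q \<noteq> c"
      then have "R p q" using pq(1) pV sg(5) unfolding R_def restr_def by blast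
      moreover have "R\<^sup>*\<^sup>* x p" using pq(2) unfolding comp_def by simp
      ultimately have "R\<^sup>*\<^sup>* x q" by (rule rtranclp.rtrancl_into_rtrancl[rotated])
      then have "q \<in> comp x" unfolding comp_def by simp
      then show False using pq(3) by blast
    qed
    have "R\<^sup>*\<^sup>* x p" using pq(2) unfolding comp_def by simp
    then have "(restr E (comp x \<union> {c}))\<^sup>*\<^sup>* x p" by (rule comp_walk)
    moreover have "restr E (comp x \<union> {c}) p c" using pq \<open>q = c\<close> unfolding restr_def by blast
    ultimately show ?thesis by (rule rtranclp.rtrancl_into_rtrancl)
  qed
  have comp_trans: "comp z \<subseteq> comp x" if "z \<in> comp x" for x z
  proof
    fix w assume "w \<in> comp z"
    then have "R\<^sup>*\<^sup>* z w" "R\<^sup>*\<^sup>* x z" using that unfolding comp_def by auto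
    then show "w \<in> comp x" unfolding comp_def using rtranclp_trans[of R x z w] by simp
  qed
  have comp_disj: "x \<in> comp y" if "z \<in> comp x" "z \<in> comp y" for x y z
  proof -
    have "R\<^sup>*\<^sup>* x z" using that(1) unfolding comp_def by simp
    then have "R\<^sup>*\<^sup>* z x" using rtranclp_sym[of R] Rsym by blast
    moreover have "R\<^sup>*\<^sup>* y z" using that(2) unfolding comp_def by simp
    ultimately have "R\<^sup>*\<^sup>* y x" using rtranclp_trans[of R y z x] by simp
    then show ?thesis unfolding comp_def by simp
  qed
  define V1 where "V1 = comp x0 \<union> {c}"
  define V2 where "V2 = V - comp x0"
  have x0c: "x0 \<in> comp x0" unfolding comp_def by simp
  have y0c: "y0 \<notin> comp x0" using nr unfolding comp_def R_def by simp
  have un: "V = V1 \<union> V2" unfolding V1_def V2_def using comp_sub[OF x0] c by blast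
  have int: "V1 \<inter> V2 = {c}" unfolding V1_def V2_def using comp_sub[OF x0] c by blast
  have finV: "finite V" using sg(1) .
  have V1V: "V1 \<subseteq> V" "V2 \<subseteq> V" using un by blast+
  have "V1 \<subset> V" using V1V y0 y0c unfolding V1_def by blast
  then have c1: "card V1 < card V" by (rule psubset_card_mono[OF finV])
  have "V2 \<subset> V" using V1V x0 x0c unfolding V2_def by blast
  then have c2: "card V2 < card V" by (rule psubset_card_mono[OF finV])
  have toc1: "(restr E V1)\<^sup>*\<^sup>* u c" if "u \<in> V1" for u
  proof (cases "u = c")
    case True then show ?thesis by simp
  next
    case False
    then have u: "u \<in> comp x0" "u \<in> V - {c}" using that comp_sub[OF x0] unfolding V1_def by auto
    have "comp u \<union> {c} \<subseteq> V1" using comp_trans[OF u(1)] unfolding V1_def by blast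
    then show ?thesis by (rule rtranclp_restr_mono[OF comp_c[OF u(2)]])
  qed
  have toc2: "(restr E V2)\<^sup>*\<^sup>* u c" if "u \<in> V2" for u
  proof (cases "u = c")
    case True then show ?thesis by simp
  next
    case False
    then have u: "u \<in> V - {c}" "u \<notin> comp x0" using that unfolding V2_def by auto
    have "comp u \<subseteq> V2"
    proof
      fix z assume z: "z \<in> comp u"
      have "z \<notin> comp x0" using comp_disj[of z u x0] z u(2) by blast
      then show "z \<in> V2" using comp_sub[OF u(1)] z unfolding V2_def by blast
    qed
    moreover have "c \<in> V2" using c comp_sub[OF x0] unfolding V2_def by blast
    ultimately have "comp u \<union> {c} \<subseteq> V2" by blast
    then show ?thesis by (rule rtranclp_restr_mono[OF comp_c[OF u(1)]])
  qed
  have conn: "(restr E S)\<^sup>*\<^sup>* u v" if "\<And>u. u \<in> S \<Longrightarrow> (restr E S)\<^sup>*\<^sup>* u c" "u \<in> S" "v \<in> S" for S u v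
  proof -
    have sy: "\<And>x y. restr E S x y \<Longrightarrow> restr E S y x" using restr_symm[of E] sg(2) by blast
    have "(restr E S)\<^sup>*\<^sup>* c v" by (rule rtranclp_sym[of "restr E S", OF sy that(1)[OF that(3)]])
    then show ?thesis by (rule rtranclp_trans[OF that(1)[OF that(2)]])
  qed
  have cV12: "c \<in> V1" "c \<in> V2" using int by auto
  have cac1: "cactus V1 (restr E V1)"
  proof (rule sub_cactus[OF cac V1V(1)])
    show "V1 \<noteq> {}" using cV12 by blast
    show "\<forall>x\<in>V1. \<forall>y\<in>V1. (restr E V1)\<^sup>*\<^sup>* x y" using conn[of V1, OF toc1] by blast
  qed
  have cac2: "cactus V2 (restr E V2)"
  proof (rule sub_cactus[OF cac V1V(2)])
    show "V2 \<noteq> {}" using cV12 by blast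
    show "\<forall>x\<in>V2. \<forall>y\<in>V2. (restr E V2)\<^sup>*\<^sup>* x y" using conn[of V2, OF toc2] by blast
  qed
  have nox: "\<not> E u w \<and> \<not> E w u" if "u \<in> V1 - {c}" "w \<in> V2 - {c}" for u w
  proof -
    have u: "u \<in> comp x0" using that unfolding V1_def by blast
    have w: "w \<in> V - {c}" "w \<notin> comp x0" using that unfolding V2_def by auto
    have uV: "u \<in> V - {c}" using comp_sub[OF x0] u by blast
    have "\<not> E u w"
    proof
      assume "E u w"
      then have "R u w" using uV w unfolding R_def restr_def by blast
      moreover have "R\<^sup>*\<^sup>* x0 u" using u unfolding comp_def by simp
      ultimately have "R\<^sup>*\<^sup>* x0 w" by (rule rtranclp.rtrancl_into_rtrancl[rotated])
      then have "w \<in> comp x0" unfolding comp_def by simp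
      then show False using w by blast
    qed
    then show ?thesis using sg(2) by blast
  qed
  show ?thesis using un int c1 c2 cac1 cac2 cV12 nox by blast
qed

definition nocut :: "'a set \<Rightarrow> ('a \<Rightarrow> 'a \<Rightarrow> bool) \<Rightarrow> bool" where
  "nocut V E \<longleftrightarrow> (\<forall>c\<in>V. \<forall>x\<in>V-{c}. \<forall>y\<in>V-{c}. (restr E (V-{c}))\<^sup>*\<^sup>* x y)"

lemma two_nbrs:
  assumes cac: "cactus V E" and n3: "3 \<le> card V" and nc: "nocut V E" and r: "r \<in> V"
  shows "\<exists>a b. a \<noteq> b \<and> E r a \<and> E r b"
proof -
  note sg = cactus_sg[OF cac]
  have "V \<noteq> {r}" using n3 by auto
  then obtain w where w: "w \<in> V" "w \<noteq> r" using r by blast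
  have "E\<^sup>*\<^sup>* r w" using sg(7) r w(1) by blast
  then obtain p a where pa: "E p a" "p \<in> {r}" "a \<notin> {r}" using leave[of E r w "{r}"] w(2) by blast
  then have ra: "E r a" "a \<noteq> r" by auto
  have aV: "a \<in> V" using ra sg(5) by blast
  have "\<not> V \<subseteq> {r, a}"
  proof
    assume "V \<subseteq> {r, a}"
    then have "card V \<le> card {r, a}" by (intro card_mono) auto
    also have "\<dots> \<le> 2" by (simp add: card_insert_le_m1)
    finally show False using n3 by simp
  qed
  then obtain z where z: "z \<in> V" "z \<noteq> r" "z \<noteq> a" by blast
  have "(restr E (V - {a}))\<^sup>*\<^sup>* r z" using nc aV r z ra unfolding nocut_def by blast
  then obtain p q where pq: "restr E (V - {a}) p q" "p \<in> {r}" "q \<notin> {r}"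
    using leave[of "restr E (V - {a})" r z "{r}"] z(2) by blast
  then have "E r q" "q \<noteq> a" unfolding restr_def by auto
  then show ?thesis using ra by blast
qed

lemma pred_idx:
  assumes "3 \<le> L" "i < L"
  shows "(if i = 0 then L - 1 else i - 1) < L" "Suc (if i = 0 then L - 1 else i - 1) mod L = i"
    "Suc i mod L \<noteq> (if i = 0 then L - 1 else i - 1)" "Suc i mod L < L"
  using assms by (auto simp: mod_Suc)

lemma cycle_struct:
  assumes cac: "cactus V E" and n3: "3 \<le> card V" and nc: "nocut V E" and r: "r \<in> V"
  shows "\<exists>C. distinct C \<and> set C = V \<and> length C = card V \<and> C ! 0 = r \<and>
     (\<forall>i<length C. \<forall>j<length C. E (C!i) (C!j) \<longleftrightarrow> (j = Suc i mod length C \<or> i = Suc j mod length C))"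
proof -
  note sg = cactus_sg[OF cac]
  obtain a b where ab: "a \<noteq> b" "E r a" "E r b" using two_nbrs[OF assms] by blast
  have inV: "a \<in> V - {r}" "b \<in> V - {r}" using ab sg(3) sg(5) by (metis Diff_iff singletonD)+
  have "(restr E (V-{r}))\<^sup>*\<^sup>* a b" using nc r inV unfolding nocut_def by blast
  then obtain P where P: "distinct P" "walk E P" "hd P = a" "last P = b" "set P \<subseteq> V - {r}" "2 \<le> length P"
    using restr_path ab(1) by metis
  have vP: "r \<notin> set P" using P(5) by blast
  have sP: "set P \<subseteq> V" using P(5) by blast
  define C where "C = r # P"
  have cyc: "simple_cycle V E C"
    unfolding C_def using mk_cycle[OF vP P(1) P(2) P(6) _ _ sP r] P(3,4) ab sg(2) by simp
  have dC: "distinct C" and LC: "3 \<le> length C" and Cst: "\<forall>i<length C. E (C ! i) (C ! ((i + 1) mod length C))"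
    using cyc unfolding simple_cycle_def by auto
  define L where "L = length C"
  have L3: "3 \<le> L" using LC unfolding L_def .
  have nbr: "E (C!i) (C!(Suc i mod L))" "E (C!i) (C!(if i = 0 then L - 1 else i - 1))" if "i < L" for i
  proof -
    show "E (C!i) (C!(Suc i mod L))" using Cst that unfolding L_def by simp
    let ?p = "if i = 0 then L - 1 else i - 1"
    have Cst': "E (C!k) (C!(Suc k mod L))" if "k < L" for k using Cst that unfolding L_def by simp
    have "E (C!?p) (C!(Suc ?p mod L))" by (rule Cst'[OF pred_idx(1)[OF L3 that]])
    then have "E (C!?p) (C!i)" unfolding pred_idx(2)[OF L3 that] .
    then show "E (C!i) (C!?p)" using sg(2) by blast
  qed
  have no3C: False if i: "i < L" and q: "E (C!i) q" "q \<noteq> C!(Suc i mod L)" "q \<noteq> C!(if i = 0 then L - 1 else i - 1)" for i q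
  proof -
    let ?p = "if i = 0 then L - 1 else i - 1"
    have "C!(Suc i mod L) \<noteq> C!?p"
      using pred_idx[OF L3 i] dC unfolding L_def by (simp add: nth_eq_iff_index_eq)
    moreover have "C!i \<in> V" using cyc i unfolding simple_cycle_def L_def by (meson nth_mem subsetD)
    moreover have "\<forall>x\<in>V-{C!i}. \<forall>y\<in>V-{C!i}. (restr E (V-{C!i}))\<^sup>*\<^sup>* x y"
      using nc \<open>C!i \<in> V\<close> unfolding nocut_def by blast
    ultimately show False using no3[OF cac, of "C!i" "C!(Suc i mod L)" "C!?p" q] nbr[OF i] q by metis
  qed
  have setC: "set C = V"
  proof (rule ccontr)
    assume "set C \<noteq> V"
    moreover have "set C \<subseteq> V" using cyc unfolding simple_cycle_def by blast
    ultimately obtain z where z: "z \<in> V" "z \<notin> set C" by blast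
    have "E\<^sup>*\<^sup>* r z" using sg(7) r z(1) by blast
    moreover have "r \<in> set C" unfolding C_def by simp
    ultimately obtain p q where pq: "E p q" "p \<in> set C" "q \<notin> set C" using leave[of E r z "set C"] z(2) by blast
    obtain i where i: "i < L" "C ! i = p" using pq(2) unfolding L_def by (meson in_set_conv_nth)
    have "q \<noteq> C!(Suc i mod L)" "q \<noteq> C!(if i = 0 then L - 1 else i - 1)"
      using pq(3) pred_idx[OF L3 i(1)] unfolding L_def by (metis nth_mem)+
    then show False using no3C[OF i(1)] pq(1) i(2) by blast
  qed
  have adj: "E (C!i) (C!j) \<longleftrightarrow> (j = Suc i mod L \<or> i = Suc j mod L)" if ij: "i < L" "j < L" for i j
  proof
    assume e: "E (C!i) (C!j)"
    show "j = Suc i mod L \<or> i = Suc j mod L"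
    proof (rule ccontr)
      assume h: "\<not> (j = Suc i mod L \<or> i = Suc j mod L)"
      have "C!j \<noteq> C!(Suc i mod L)" using h dC ij pred_idx[OF L3 ij(1)] unfolding L_def by (simp add: nth_eq_iff_index_eq)
      moreover have "j \<noteq> (if i = 0 then L - 1 else i - 1)" using h pred_idx[OF L3 ij(1)] by metis
      then have "C!j \<noteq> C!(if i = 0 then L - 1 else i - 1)" using dC ij pred_idx[OF L3 ij(1)] unfolding L_def by (simp add: nth_eq_iff_index_eq)
      ultimately show False using no3C[OF ij(1) e] by blast
    qed
  next
    assume "j = Suc i mod L \<or> i = Suc j mod L"
    then show "E (C!i) (C!j)"
    proof
      assume "j = Suc i mod L" then show ?thesis using nbr(1)[OF ij(1)] by simp
    next
      assume "i = Suc j mod L" then show ?thesis using nbr(1)[OF ij(2)] sg(2) by simp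
    qed
  qed
  have "length C = card V" using distinct_card[OF dC] setC by simp
  moreover have "C ! 0 = r" unfolding C_def by simp
  ultimately show ?thesis using dC setC adj unfolding L_def by blast
qed


definition gad :: "nat \<Rightarrow> nat \<Rightarrow> shape" where
  "gad n i = (if i = 0 then (False, 0, 0, 3*n, 0)
    else if n = 3 then (if i = 1 then (False,1,0,2,1) else (False,2,0,2,1))
    else if n = 4 then (if i = 1 then (True,2,-2,2,1) else if i = 2 then (True,2,-1,2,1) else (False,1,0,1,2))
    else if i = 1 then (True,1,-2,2,1)
    else if i = 2 then (True,1,-3,2,4)
    else if i = n - 1 then (False, 3*int n - 8, 0, 1, 2)
    else if i = n - 2 then (False, 3*int n - 11, -1, 4, 2)
    else (False, 3*int i - 5, -1, 4, 0))"

definition adjn :: "nat \<Rightarrow> nat \<Rightarrow> nat \<Rightarrow> bool" where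
  "adjn n i j \<longleftrightarrow> j = i + 1 \<or> i = j + 1 \<or> (i = 0 \<and> j = n - 1) \<or> (j = 0 \<and> i = n - 1)"

lemma g5_0: "gad n 0 = (False, 0, 0, 3*n, 0)" by (simp add: gad_def)
lemma g5_1: "5 \<le> n \<Longrightarrow> gad n (Suc 0) = (True,1,-2,2,1)" by (simp add: gad_def)
lemma g5_2: "5 \<le> n \<Longrightarrow> gad n 2 = (True,1,-3,2,4)" by (simp add: gad_def)
lemma g5_m: "5 \<le> n \<Longrightarrow> 3 \<le> i \<Longrightarrow> i + 3 \<le> n \<Longrightarrow> gad n i = (False, 3*int i - 5, -1, 4, 0)" by (simp add: gad_def, arith)
lemma g5_p: "5 \<le> n \<Longrightarrow> i + 2 = n \<Longrightarrow> gad n i = (False, 3*int n - 11, -1, 4, 2)" by (simp add: gad_def, arith)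
lemma g5_k: "5 \<le> n \<Longrightarrow> i + 1 = n \<Longrightarrow> gad n i = (False, 3*int n - 8, 0, 1, 2)" by (simp add: gad_def)

lemma gad_share5:
  assumes "5 \<le> n" "i < n" "j < n" "i \<noteq> j"
  shows "share (gad n i) (gad n j) \<longleftrightarrow> adjn n i j"
proof -
  have ci: "i = 0 \<or> i = 1 \<or> i = 2 \<or> (3 \<le> i \<and> i + 3 \<le> n) \<or> i + 2 = n \<or> i + 1 = n" using assms by arith
  have cj: "j = 0 \<or> j = 1 \<or> j = 2 \<or> (3 \<le> j \<and> j + 3 \<le> n) \<or> j + 2 = n \<or> j + 1 = n" using assms by arith
  from ci cj show ?thesis
    using assms apply (elim disjE)
    apply (simp_all add: g5_0 g5_1 g5_2 g5_m g5_p g5_k share_iff adjn_def)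
    apply arith+
    done
qed
lemma n3_cases: "(i::nat) < 3 \<Longrightarrow> i = 0 \<or> i = 1 \<or> i = 2" by arith
lemma n4_cases: "(i::nat) < 4 \<Longrightarrow> i = 0 \<or> i = 1 \<or> i = 2 \<or> i = 3" by arith

lemma gad_share34:
  assumes "n = 3 \<or> n = 4" "i < n" "j < n" "i \<noteq> j"
  shows "share (gad n i) (gad n j) \<longleftrightarrow> adjn n i j"
  using assms(1)
proof
  assume n: "n = 3"
  have "i = 0 \<or> i = 1 \<or> i = 2" "j = 0 \<or> j = 1 \<or> j = 2" using assms n by arith+
  then show ?thesis using assms(4) n
    by (elim disjE) (simp_all add: gad_def share_iff adjn_def)
next
  assume n: "n = 4"
  have "i = 0 \<or> i = 1 \<or> i = 2 \<or> i = 3" "j = 0 \<or> j = 1 \<or> j = 2 \<or> j = 3" using assms n by arith+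
  then show ?thesis using assms(4) n
    by (elim disjE) (simp_all add: gad_def share_iff adjn_def)
qed

lemma gad_share:
  assumes "3 \<le> n" "i < n" "j < n" "i \<noteq> j"
  shows "share (gad n i) (gad n j) \<longleftrightarrow> (j = Suc i mod n \<or> i = Suc j mod n)"
proof -
  have "share (gad n i) (gad n j) \<longleftrightarrow> adjn n i j"
    using assms gad_share5[of n i j] gad_share34[of n i j] by linarith
  moreover have "adjn n i j \<longleftrightarrow> (j = Suc i mod n \<or> i = Suc j mod n)"
    using assms unfolding adjn_def by (auto simp: mod_Suc)
  ultimately show ?thesis by simp
qed

lemma gad_valid: "3 \<le> n \<Longrightarrow> valid (gad n i)"
  by (simp add: gad_def)

lemma gad_noV0: "\<not> Vs (gad n 0) x y"
  by (simp add: gad_def Vs_def)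

lemma gad_line:
  assumes "3 \<le> n" "0 < i" "i < n" "Hs (gad n i) x y" "Hs (gad n 0) x' y"
  shows "Hs (gad n 0) x y"
proof -
  consider "n = 3" | "n = 4" | "5 \<le> n" using assms by arith
  then show ?thesis
  proof cases
    case 1
    then have "i = 1 \<or> i = 2" using assms by arith
    then show ?thesis using assms(4,5) 1 by (elim disjE) (simp_all add: gad_def Hs_def)
  next
    case 2
    then have "i = 1 \<or> i = 2 \<or> i = 3" using assms by arith
    then show ?thesis using assms(4,5) 2 by (elim disjE) (simp_all add: gad_def Hs_def)
  next
    case 3
    have ci: "i = 1 \<or> i = 2 \<or> (3 \<le> i \<and> i + 3 \<le> n) \<or> i + 2 = n \<or> i + 1 = n" using assms by arith
    then show ?thesis using assms(4,5) 3
      apply (elim disjE)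
      apply (simp_all add: g5_0 g5_1 g5_2 g5_m g5_p g5_k Hs_def)
      done
  qed
qed

lemma gad_priv:
  assumes "3 \<le> n" "i < n"
  shows "(\<exists>x y. Hs (gad n i) x y \<and> (\<forall>j<n. j \<noteq> i \<longrightarrow> \<not> Hs (gad n j) x y)) \<or>
         (\<exists>x y. Vs (gad n i) x y \<and> (\<forall>j<n. j \<noteq> i \<longrightarrow> \<not> Vs (gad n j) x y))"
proof -
  have "(n = 3 \<and> (i = 0)) \<or> (n = 3 \<and> (i = 1)) \<or> (n = 3 \<and> (i = 2)) \<or> (n = 4 \<and> (i = 0)) \<or> (n = 4 \<and> (i = 1)) \<or> (n = 4 \<and> (i = 2)) \<or> (n = 4 \<and> (i = 3)) \<or> (5 \<le> n \<and> (i = 0)) \<or> (5 \<le> n \<and> (i = 1)) \<or> (5 \<le> n \<and> (i = 2)) \<or> (5 \<le> n \<and> (3 \<le> i \<and> i + 3 \<le> n)) \<or> (5 \<le> n \<and> (i + 2 = n)) \<or> (5 \<le> n \<and> (i + 1 = n))" using assms by arith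
  then show ?thesis
  proof (elim disjE)
    assume h: "n = 3 \<and> (i = 0)"
    then have nn: "n = 3" and ii: "i = 0" by auto
    have w1: "Hs (gad n i) (0) (0)" using ii nn by (simp add: gad_def Hs_def)
    have w2: "\<not> Hs (gad n j) (0) (0)" if "j < n" "j \<noteq> i" for j
    proof -
      have "j = 0 \<or> j = 1 \<or> j = 2" using that nn by arith
      then show ?thesis using that ii nn
        apply (elim disjE)
        apply (simp_all add: gad_def Hs_def)
        done
    qed
    show ?thesis using w1 w2 by blast
  next
    assume h: "n = 3 \<and> (i = 1)"
    then have nn: "n = 3" and ii: "i = 1" by auto
    have w1: "Vs (gad n i) (3) (0)" using ii nn by (simp add: gad_def Vs_def)
    have w2: "\<not> Vs (gad n j) (3) (0)" if "j < n" "j \<noteq> i" for j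
    proof -
      have "j = 0 \<or> j = 1 \<or> j = 2" using that nn by arith
      then show ?thesis using that ii nn
        apply (elim disjE)
        apply (simp_all add: gad_def Vs_def)
        done
    qed
    show ?thesis using w1 w2 by blast
  next
    assume h: "n = 3 \<and> (i = 2)"
    then have nn: "n = 3" and ii: "i = 2" by auto
    have w1: "Vs (gad n i) (4) (0)" using ii nn by (simp add: gad_def Vs_def)
    have w2: "\<not> Vs (gad n j) (4) (0)" if "j < n" "j \<noteq> i" for j
    proof -
      have "j = 0 \<or> j = 1 \<or> j = 2" using that nn by arith
      then show ?thesis using that ii nn
        apply (elim disjE)
        apply (simp_all add: gad_def Vs_def)
        done
    qed
    show ?thesis using w1 w2 by blast
  next
    assume h: "n = 4 \<and> (i = 0)"
    then have nn: "n = 4" and ii: "i = 0" by auto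
    have w1: "Hs (gad n i) (0) (0)" using ii nn by (simp add: gad_def Hs_def)
    have w2: "\<not> Hs (gad n j) (0) (0)" if "j < n" "j \<noteq> i" for j
    proof -
      have "j = 0 \<or> j = 1 \<or> j = 2 \<or> j = 3" using that nn by arith
      then show ?thesis using that ii nn
        apply (elim disjE)
        apply (simp_all add: gad_def Hs_def)
        done
    qed
    show ?thesis using w1 w2 by blast
  next
    assume h: "n = 4 \<and> (i = 1)"
    then have nn: "n = 4" and ii: "i = 1" by auto
    have w1: "Vs (gad n i) (2) (-2)" using ii nn by (simp add: gad_def Vs_def)
    have w2: "\<not> Vs (gad n j) (2) (-2)" if "j < n" "j \<noteq> i" for j
    proof -
      have "j = 0 \<or> j = 1 \<or> j = 2 \<or> j = 3" using that nn by arith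
      then show ?thesis using that ii nn
        apply (elim disjE)
        apply (simp_all add: gad_def Vs_def)
        done
    qed
    show ?thesis using w1 w2 by blast
  next
    assume h: "n = 4 \<and> (i = 2)"
    then have nn: "n = 4" and ii: "i = 2" by auto
    have w1: "Hs (gad n i) (2) (1)" using ii nn by (simp add: gad_def Hs_def)
    have w2: "\<not> Hs (gad n j) (2) (1)" if "j < n" "j \<noteq> i" for j
    proof -
      have "j = 0 \<or> j = 1 \<or> j = 2 \<or> j = 3" using that nn by arith
      then show ?thesis using that ii nn
        apply (elim disjE)
        apply (simp_all add: gad_def Hs_def)
        done
    qed
    show ?thesis using w1 w2 by blast
  next
    assume h: "n = 4 \<and> (i = 3)"
    then have nn: "n = 4" and ii: "i = 3" by auto
    have w1: "Vs (gad n i) (2) (1)" using ii nn by (simp add: gad_def Vs_def)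
    have w2: "\<not> Vs (gad n j) (2) (1)" if "j < n" "j \<noteq> i" for j
    proof -
      have "j = 0 \<or> j = 1 \<or> j = 2 \<or> j = 3" using that nn by arith
      then show ?thesis using that ii nn
        apply (elim disjE)
        apply (simp_all add: gad_def Vs_def)
        done
    qed
    show ?thesis using w1 w2 by blast
  next
    assume h: "5 \<le> n \<and> (i = 0)"
    then have nn: "5 \<le> n" and ii: "i = 0" by auto
    have w1: "Hs (gad n i) (0) (0)" using ii nn by (simp add: g5_0 g5_1 g5_2 g5_m g5_p g5_k Hs_def)
    have w2: "\<not> Hs (gad n j) (0) (0)" if "j < n" "j \<noteq> i" for j
    proof -
      have "j = 0 \<or> j = 1 \<or> j = 2 \<or> (3 \<le> j \<and> j + 3 \<le> n) \<or> j + 2 = n \<or> j + 1 = n" using that nn by arith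
      then show ?thesis using that ii nn
        apply (elim disjE)
        apply (simp_all add: g5_0 g5_1 g5_2 g5_m g5_p g5_k Hs_def)
        done
    qed
    show ?thesis using w1 w2 by blast
  next
    assume h: "5 \<le> n \<and> (i = 1)"
    then have nn: "5 \<le> n" and ii: "i = 1" by auto
    have w1: "Vs (gad n i) (1) (-1)" using ii nn by (simp add: g5_0 g5_1 g5_2 g5_m g5_p g5_k Vs_def)
    have w2: "\<not> Vs (gad n j) (1) (-1)" if "j < n" "j \<noteq> i" for j
    proof -
      have "j = 0 \<or> j = 1 \<or> j = 2 \<or> (3 \<le> j \<and> j + 3 \<le> n) \<or> j + 2 = n \<or> j + 1 = n" using that nn by arith
      then show ?thesis using that ii nn
        apply (elim disjE)
        apply (simp_all add: g5_0 g5_1 g5_2 g5_m g5_p g5_k Vs_def)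
        done
    qed
    show ?thesis using w1 w2 by blast
  next
    assume h: "5 \<le> n \<and> (i = 2)"
    then have nn: "5 \<le> n" and ii: "i = 2" by auto
    have w1: "Vs (gad n i) (1) (-3)" using ii nn by (simp add: g5_0 g5_1 g5_2 g5_m g5_p g5_k Vs_def)
    have w2: "\<not> Vs (gad n j) (1) (-3)" if "j < n" "j \<noteq> i" for j
    proof -
      have "j = 0 \<or> j = 1 \<or> j = 2 \<or> (3 \<le> j \<and> j + 3 \<le> n) \<or> j + 2 = n \<or> j + 1 = n" using that nn by arith
      then show ?thesis using that ii nn
        apply (elim disjE)
        apply (simp_all add: g5_0 g5_1 g5_2 g5_m g5_p g5_k Vs_def)
        done
    qed
    show ?thesis using w1 w2 by blast
  next
    assume h: "5 \<le> n \<and> (3 \<le> i \<and> i + 3 \<le> n)"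
    then have nn: "5 \<le> n" and ii: "3 \<le> i \<and> i + 3 \<le> n" by auto
    have w1: "Hs (gad n i) (3 * int i - 3) (-1)" using ii nn by (simp add: g5_0 g5_1 g5_2 g5_m g5_p g5_k Hs_def)
    have w2: "\<not> Hs (gad n j) (3 * int i - 3) (-1)" if "j < n" "j \<noteq> i" for j
    proof -
      have "j = 0 \<or> j = 1 \<or> j = 2 \<or> (3 \<le> j \<and> j + 3 \<le> n) \<or> j + 2 = n \<or> j + 1 = n" using that nn by arith
      then show ?thesis using that ii nn
        apply (elim disjE)
        apply (simp_all add: g5_0 g5_1 g5_2 g5_m g5_p g5_k Hs_def)
        done
    qed
    show ?thesis using w1 w2 by blast
  next
    assume h: "5 \<le> n \<and> (i + 2 = n)"
    then have nn: "5 \<le> n" and ii: "i + 2 = n" by auto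
    have w1: "Hs (gad n i) (3 * int n - 9) (-1)" using ii nn by (simp add: g5_0 g5_1 g5_2 g5_m g5_p g5_k Hs_def)
    have w2: "\<not> Hs (gad n j) (3 * int n - 9) (-1)" if "j < n" "j \<noteq> i" for j
    proof -
      have "j = 0 \<or> j = 1 \<or> j = 2 \<or> (3 \<le> j \<and> j + 3 \<le> n) \<or> j + 2 = n \<or> j + 1 = n" using that nn by arith
      then show ?thesis using that ii nn
        apply (elim disjE)
        apply (simp_all add: g5_0 g5_1 g5_2 g5_m g5_p g5_k Hs_def)
        done
    qed
    show ?thesis using w1 w2 by blast
  next
    assume h: "5 \<le> n \<and> (i + 1 = n)"
    then have nn: "5 \<le> n" and ii: "i + 1 = n" by auto
    have w1: "Vs (gad n i) (3 * int n - 7) (1)" using ii nn by (simp add: g5_0 g5_1 g5_2 g5_m g5_p g5_k Vs_def)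
    have w2: "\<not> Vs (gad n j) (3 * int n - 7) (1)" if "j < n" "j \<noteq> i" for j
    proof -
      have "j = 0 \<or> j = 1 \<or> j = 2 \<or> (3 \<le> j \<and> j + 3 \<le> n) \<or> j + 2 = n \<or> j + 1 = n" using that nn by arith
      then show ?thesis using that ii nn
        apply (elim disjE)
        apply (simp_all add: g5_0 g5_1 g5_2 g5_m g5_p g5_k Vs_def)
        done
    qed
    show ?thesis using w1 w2 by blast
  qed
qed


lemma vroot_tr: "vroot V Q r \<Longrightarrow> hroot V (tr \<circ> Q) r"
  unfolding hroot_def vroot_def by (simp add: Hs_tr Vs_tr)

lemma glue:
  assumes V12: "V1 \<inter> V2 = {c}" and fin2: "finite V2"
    and nocross: "\<forall>u\<in>V1-{c}. \<forall>w\<in>V2-{c}. \<not> E u w \<and> \<not> E w u"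
    and S1: "Sinv V1 E r" and rV1: "r \<in> V1" and S2: "Sinv V2 E c"
  shows "Sinv (V1 \<union> V2) E r"
proof -
  have cV1: "c \<in> V1" using V12 by blast
  obtain Q1 where q1: "good_rep V1 E Q1" "hroot V1 Q1 r \<or> vroot V1 Q1 r" "privs V1 Q1"
    using S1 unfolding Sinv_def by blast
  obtain Q1' X Y where q1': "good_rep V1 E Q1'" "hroot V1 Q1' r \<or> vroot V1 Q1' r" "privs V1 Q1'"
    "Hs (Q1' c) X Y" "\<forall>w\<in>V1-{c}. \<not> Hs (Q1' w) X Y"
  proof -
    from q1(3) cV1 consider a b where "Hs (Q1 c) a b" "\<forall>w\<in>V1-{c}. \<not> Hs (Q1 w) a b"
      | a b where "Vs (Q1 c) a b" "\<forall>w\<in>V1-{c}. \<not> Vs (Q1 w) a b"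
      unfolding privs_def by blast
    then show ?thesis
    proof cases
      case 1 then show ?thesis using that q1 by blast
    next
      case 2
      have "Hs ((tr \<circ> Q1) c) b a" "\<forall>w\<in>V1-{c}. \<not> Hs ((tr \<circ> Q1) w) b a"
        using 2 by (simp_all add: Hs_tr)
      then show ?thesis using that Sinv_tr[OF q1] by blast
    qed
  qed
  obtain Q2 where q2: "good_rep V2 E Q2" "hroot V2 Q2 c \<or> vroot V2 Q2 c" "privs V2 Q2"
    using S2 unfolding Sinv_def by blast
  obtain Q2' where q2': "good_rep V2 E Q2'" "hroot V2 Q2' c" "privs V2 Q2'"
  proof (cases "hroot V2 Q2 c")
    case True then show ?thesis using that q2 by blast
  next
    case False
    then have "vroot V2 Q2 c" using q2(2) by blast
    then have "hroot V2 (tr \<circ> Q2) c" by (rule vroot_tr)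
    then show ?thesis using that Sinv_tr[OF q2] by blast
  qed
  show ?thesis
    by (rule glue_core[OF V12 fin2 q1'(1) q2'(1) nocross q1'(2) rV1 q1'(3) q1'(4) q1'(5) q2'(2) q2'(3)])
qed

lemma good_rep_restr: "good_rep V (restr E V) Q \<longleftrightarrow> good_rep V E Q"
  unfolding good_rep_def restr_def by auto

lemma Sinv_restr: "Sinv V (restr E V) r \<longleftrightarrow> Sinv V E r"
  unfolding Sinv_def good_rep_restr ..

lemma base1:
  assumes "V = {r}"
  shows "Sinv V E r"
proof -
  define Q :: "'a \<Rightarrow> shape" where "Q = (\<lambda>_. (False, 0, 0, 1, 0))"
  have "good_rep V E Q" unfolding good_rep_def Q_def using assms by auto
  moreover have "hroot V Q r" unfolding hroot_def Q_def using assms by (auto simp: Vs_def)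
  moreover have "privs V Q" unfolding privs_def Q_def using assms by (auto simp: Hs_def)
  ultimately show ?thesis unfolding Sinv_def by blast
qed

lemma base2:
  assumes V: "V = {r, v}" "r \<noteq> v" and e: "E r v" "E v r"
  shows "Sinv V E r"
proof -
  define Q :: "'a \<Rightarrow> shape" where "Q = (\<lambda>u. if u = r then (False, 0, 0, 3, 0) else (False, 1, 0, 1, 1))"
  have "share (Q r) (Q v)" "share (Q v) (Q r)" unfolding Q_def using V(2) by (auto simp: share_iff)
  then have "good_rep V E Q" unfolding good_rep_def using V e by (auto simp: Q_def)
  moreover have "hroot V Q r" unfolding hroot_def Q_def using V by (auto simp: Vs_def Hs_def)
  moreover have "privs V Q"
    unfolding privs_def
  proof
    fix u assume "u \<in> V"
    then consider "u = r" | "u = v" using V by blast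
    then show "(\<exists>x y. Hs (Q u) x y \<and> (\<forall>w\<in>V - {u}. \<not> Hs (Q w) x y)) \<or>
         (\<exists>x y. Vs (Q u) x y \<and> (\<forall>w\<in>V - {u}. \<not> Vs (Q w) x y))"
    proof cases
      case 1
      have "Hs (Q u) 0 0 \<and> (\<forall>w\<in>V - {u}. \<not> Hs (Q w) 0 0)" using 1 V unfolding Q_def by (auto simp: Hs_def)
      then show ?thesis by blast
    next
      case 2
      have "Vs (Q u) 2 0 \<and> (\<forall>w\<in>V - {u}. \<not> Vs (Q w) 2 0)" using 2 V unfolding Q_def by (auto simp: Vs_def)
      then show ?thesis by blast
    qed
  qed
  ultimately show ?thesis unfolding Sinv_def by blast
qed

lemma base_cycle:
  assumes cac: "cactus V E" and n3: "3 \<le> card V" and nc: "nocut V E" and r: "r \<in> V"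
  shows "Sinv V E r"
proof -
  obtain C where C: "distinct C" "set C = V" "length C = card V" "C ! 0 = r"
    "\<forall>i<length C. \<forall>j<length C. E (C!i) (C!j) \<longleftrightarrow> (j = Suc i mod length C \<or> i = Suc j mod length C)"
    using cycle_struct[OF assms] by blast
  define n where "n = card V"
  have n: "3 \<le> n" "length C = n" using n3 C(3) unfolding n_def by auto
  define idx where "idx v = (THE i. i < n \<and> C ! i = v)" for v
  have idx1: "idx v < n \<and> C ! (idx v) = v" if "v \<in> V" for v
  proof -
    have "v \<in> set C" using that C(2) by simp
    then have "\<exists>!i. i < length C \<and> C ! i = v" by (rule distinct_Ex1[OF C(1)])
    then have "\<exists>!i. i < n \<and> C ! i = v" using n(2) by simp
    then show ?thesis unfolding idx_def by (rule theI')
  qed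
  have idx2: "idx (C ! i) = i" if "i < n" for i
  proof -
    have "C ! i \<in> set C" using that n(2) by simp
    then have "C ! i \<in> V" using C(2) by simp
    then have "idx (C ! i) < n" "C ! (idx (C ! i)) = C ! i" using idx1 by auto
    then show ?thesis using C(1) that n(2) by (simp add: nth_eq_iff_index_eq)
  qed
  define Q where "Q v = gad n (idx v)" for v
  have ir: "idx r = 0" using idx2[of 0] n C(4) by simp
  have good: "good_rep V E Q"
    unfolding good_rep_def
  proof (intro conjI ballI impI)
    fix v assume "v \<in> V" then show "valid (Q v)" unfolding Q_def using gad_valid n by blast
  next
    fix u v assume uv: "u \<in> V" "v \<in> V" "u \<noteq> v"
    have iu: "idx u < n" "C ! idx u = u" and iv: "idx v < n" "C ! idx v = v" using idx1 uv by auto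
    have ne: "idx u \<noteq> idx v"
    proof
      assume "idx u = idx v"
      then have "C ! idx u = C ! idx v" by simp
      then show False using iu(2) iv(2) uv(3) by simp
    qed
    have "E (C ! idx u) (C ! idx v) \<longleftrightarrow> (idx v = Suc (idx u) mod n \<or> idx u = Suc (idx v) mod n)"
      using C(5) iu(1) iv(1) n(2) by simp
    then have "E u v \<longleftrightarrow> (idx v = Suc (idx u) mod n \<or> idx u = Suc (idx v) mod n)"
      unfolding iu(2) iv(2) .
    also have "\<dots> \<longleftrightarrow> share (Q u) (Q v)" unfolding Q_def using gad_share[OF n(1) iu(1) iv(1) ne] by simp
    finally show "E u v = share (Q u) (Q v)" .
  qed
  have root: "hroot V Q r"
    unfolding hroot_def
  proof (intro conjI allI ballI impI)
    fix x y show "\<not> Vs (Q r) x y" unfolding Q_def ir by (rule gad_noV0)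
  next
    fix v x y x' assume v: "v \<in> V - {r}" and h: "Hs (Q v) x y" "Hs (Q r) x' y"
    have "idx v < n" "C ! idx v = v" using idx1 v by auto
    moreover have "idx v \<noteq> 0"
    proof
      assume "idx v = 0"
      then have "v = r" using \<open>C ! idx v = v\<close> C(4) by simp
      then show False using v by blast
    qed
    ultimately show "Hs (Q r) x y" using gad_line[OF n(1), of "idx v" x y x'] h unfolding Q_def ir by simp
  qed
  have priv: "privs V Q"
    unfolding privs_def
  proof
    fix v assume v: "v \<in> V"
    have iv: "idx v < n" using idx1 v by auto
    have ne: "idx w < n \<and> idx w \<noteq> idx v" if "w \<in> V - {v}" for w
    proof -
      have w: "w \<in> V" "w \<noteq> v" using that by auto
      have a: "idx w < n" "C ! idx w = w" using idx1[OF w(1)] by auto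
      have b: "C ! idx v = v" using idx1[OF v] by auto
      have "idx w \<noteq> idx v"
      proof
        assume "idx w = idx v"
        then have "C ! idx w = C ! idx v" by simp
        then show False using a(2) b w(2) by simp
      qed
      then show ?thesis using a by simp
    qed
    from gad_priv[OF n(1) iv] consider x y where "Hs (gad n (idx v)) x y" "\<forall>j<n. j \<noteq> idx v \<longrightarrow> \<not> Hs (gad n j) x y"
      | x y where "Vs (gad n (idx v)) x y" "\<forall>j<n. j \<noteq> idx v \<longrightarrow> \<not> Vs (gad n j) x y" by blast
    then show "(\<exists>x y. Hs (Q v) x y \<and> (\<forall>w\<in>V - {v}. \<not> Hs (Q w) x y)) \<or>
         (\<exists>x y. Vs (Q v) x y \<and> (\<forall>w\<in>V - {v}. \<not> Vs (Q w) x y))"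
    proof cases
      case 1
      then have "Hs (Q v) x y \<and> (\<forall>w\<in>V - {v}. \<not> Hs (Q w) x y)" unfolding Q_def using ne by blast
      then show ?thesis by blast
    next
      case 2
      then have "Vs (Q v) x y \<and> (\<forall>w\<in>V - {v}. \<not> Vs (Q w) x y)" unfolding Q_def using ne by blast
      then show ?thesis by blast
    qed
  qed
  show ?thesis unfolding Sinv_def using good root priv by blast
qed

lemma main_ind:
  assumes "cactus V E" "r \<in> V"
  shows "Sinv V E r"
  using assms
proof (induction "card V" arbitrary: V E r rule: less_induct)
  case less
  note cac = less.prems(1) and r = less.prems(2)
  note sg = cactus_sg[OF cac]
  have "0 < card V" using sg(1) r by (auto simp: card_gt_0_iff)
  then have c1: "1 \<le> card V" by simp
  consider "card V = 1" | "card V = 2" | "3 \<le> card V \<and> nocut V E" | "3 \<le> card V \<and> \<not> nocut V E"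
    using c1 by arith
  then show ?case
  proof cases
    case 1
    then obtain z where "V = {z}" by (rule card_1_singletonE)
    then have "V = {r}" using r by simp
    then show ?thesis by (rule base1)
  next
    case 2
    then have "\<exists>x y. V = {x, y} \<and> x \<noteq> y" by (simp add: card_2_iff)
    then obtain a b where ab: "V = {a, b}" "a \<noteq> b" by blast
    have "\<exists>v. V = {r, v} \<and> r \<noteq> v" using ab r by auto
    then obtain v where v: "V = {r, v}" "r \<noteq> v" by blast
    have "v \<in> V" using v by simp
    then have "E\<^sup>*\<^sup>* r v" using sg(7) r by simp
    then obtain p q where pq: "E p q" "p \<in> {r}" "q \<notin> {r}" using leave[of E r v "{r}"] v(2) by blast
    have "q \<in> V" using pq(1) sg(5) by simp
    then have "q = v" using pq(3) v(1) by simp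
    have "p = r" using pq(2) by simp
    then have "E r v" using pq(1) \<open>q = v\<close> by simp
    then have "E v r" using sg(2) by simp
    then show ?thesis using base2[of V r v E] v \<open>E r v\<close> by simp
  next
    case 3
    then have "3 \<le> card V" "nocut V E" by auto
    then show ?thesis by (rule base_cycle[OF cac _ _ r])
  next
    case 4
    then obtain c x0 y0 where cut: "c \<in> V" "x0 \<in> V - {c}" "y0 \<in> V - {c}" "\<not> (restr E (V - {c}))\<^sup>*\<^sup>* x0 y0"
      unfolding nocut_def by blast
    obtain V1 V2 where sp: "V = V1 \<union> V2" "V1 \<inter> V2 = {c}" "card V1 < card V" "card V2 < card V"
      "cactus V1 (restr E V1)" "cactus V2 (restr E V2)" "c \<in> V1" "c \<in> V2"
      "\<forall>u\<in>V1-{c}. \<forall>w\<in>V2-{c}. \<not> E u w \<and> \<not> E w u"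
      using cut_split[OF cac cut] by blast
    have "V1 \<subseteq> V" "V2 \<subseteq> V" using sp(1) by auto
    then have fin: "finite V1" "finite V2" using sg(1) by (auto intro: finite_subset)
    show ?thesis
    proof (cases "r \<in> V1")
      case True
      have S1: "Sinv V1 E r" using less.hyps[OF sp(3) sp(5) True] unfolding Sinv_restr .
      have S2: "Sinv V2 E c" using less.hyps[OF sp(4) sp(6) sp(8)] unfolding Sinv_restr .
      show ?thesis using glue[OF sp(2) fin(2) sp(9) S1 True S2] sp(1) by simp
    next
      case False
      then have rV2: "r \<in> V2" using r sp(1) by blast
      have S1: "Sinv V2 E r" using less.hyps[OF sp(4) sp(6) rV2] unfolding Sinv_restr .
      have S2: "Sinv V1 E c" using less.hyps[OF sp(3) sp(5) sp(7)] unfolding Sinv_restr .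
      have i2: "V2 \<inter> V1 = {c}" using sp(2) by blast
      have nc2: "\<forall>u\<in>V2-{c}. \<forall>w\<in>V1-{c}. \<not> E u w \<and> \<not> E w u" using sp(9) by blast
      have "V2 \<union> V1 = V" using sp(1) by blast
      then show ?thesis using glue[OF i2 fin(1) nc2 S1 rV2 S2] by simp
    qed
  qed
qed

theorem theorem5p9:
  fixes V :: "'a set" and E :: "'a \<Rightarrow> 'a \<Rightarrow> bool"
  assumes "cactus V E"
  shows "in_B1m V E"
proof -
  obtain r where r: "r \<in> V" using cactus_sg(6)[OF assms] by blast
  obtain Q where "good_rep V E Q" using main_ind[OF assms r] unfolding Sinv_def by blast
  then show ?thesis by (rule good_rep_B1m)
qed


end
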